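(* Let $q_0,p_0,s_0,s,r\in(0,\infty)$ and $r_0,q,p\in(0,\infty]$ satisfy $$\frac1q-\frac1{q_0}=\frac1p-\frac1{p_0}=\frac1s-\frac1{s_0}=\frac1{r_0}-\frac1r<0 .$$ Let $w$ be a weight on $\Omega$ with $[w]_{(s,r)}<\infty$. Assume: (1) there is a function $c:(1,\infty]\to[1,\infty)$ such that $\|\mathcal M\|_{L^t_v(\Omega)\to L^t_v(\Omega)}\le c(t)[v]_t^{t'}$ for all $t\in(1,\infty]$ and all weights $v$ on $\Omega$; (2) there are a set $V$, a map $S:V\to L^0(\Omega)$, a map $$T:\bigcup_{w_0:\,[w_0]_{(s_0,r_0)}<\infty} S^{-1}\big(L^{p_0}_{w_0}(\Omega)\big)\to L^0(\Omega)$$ (union over all weights $w_0$ with $[w_0]_{(s_0,r_0)}<\infty$), and an increasing function $\phi:\mathbb R\to\mathbb R$ such that for every weight $w_0$ with $[w_0]_{(s_0,r_0)}<\infty$ and every $f\in S^{-1}(L^{p_0}_{w_0}(\Omega))$, $$\|Tf\|_{L^{q_0}_{w_0}(\Omega)}\le \phi([w_0]_{(s_0,r_0)})\,\|Sf\|_{L^{p_0}_{w_0}(\Omega)}.$$ Then $S^{-1}(L^p_w(\Omega))$ is contained in the domain of $T$, and for every $\kappa\in(1,\infty)$ and every $f\in S^{-1}(L^p_w(\Omega))$, $$\|Tf\|_{L^q_w(\Omega)}\le \kappa^{\beta}\,\phi\Big((\kappa' c(t))^{\beta}[w]_{(s,r)}^{s/s_0}\Big)\,\|Sf\|_{L^p_w(\Omega)},$$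 where $t:=(\frac1s+\frac1r)/\frac1r$ and $\beta:=(\frac1s+\frac1r)(\frac1r-\frac1{r_0})/\frac1r$.
   Context: $(\Omega,\mu)$ is a $\sigma$-finite measure space with a fixed basis of sets $\mathcal U$: a countable collection of measurable sets $U$ with $0<\mu(U)<\infty$ such that $\bigcup_{U\in\mathcal U}U=\Omega$ and for all $x,y\in\Omega$ there is $U\in\mathcal U$ with $x,y\in U$. A weight is a measurable function $w:\Omega\to(0,\infty)$. $L^0(\Omega)$ denotes the measurable functions on $\Omega$. For $p\in(0,\infty]$ and a weight $w$, $L^p_w(\Omega)$ is the space of measurable $f$ with $\|f\|_{L^p_w(\Omega)}:=\|fw\|_{L^p(\Omega)}<\infty$ (the weight multiplies the function, not the measure). For $s,r\in(0,\infty]$ and weights $w,v$, $$[w,v]_{(s,r)}:=\sup_{U\in\mathcal U}\mu(U)^{-\frac1s-\frac1r}\|w\|_{L^s(U)}\|v^{-1}\|_{L^r(U)}\quad(\tfrac1\infty:=0),$$ $[w]_{(s,r)}:=[w,w]_{(s,r)}$, and for $p\in[1,\infty]$, $[w,v]_p:=[w,v]_{(p,p')}$, $[w]_p:=[w,w]_p$, where $p'$ is the Hölder conjugate exponent. The maximal operator is $\mathcal Mf:=\sup_{U\in\mathcal U}\mu(U)^{-1}\|f\|_{L^1(U)}\mathbf 1_U$. For $\kappa\in(1,\infty)$, $\kappa'=\kappa/(\kappa-1)$. $\|\mathcal M\|_{X\to Y}$ denotes $\sup\{\|\mathcal Mf\|_Y:\|f\|_X\le1\}$. *)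

theory Defs
  imports "HOL-Probability.Probability"
begin

definition inv_exp :: "ereal \<Rightarrow> real" where
  "inv_exp p = (if p = \<infinity> then 0 else 1 / real_of_ereal p)"

definition conj_exp :: "ereal \<Rightarrow> ereal" where
  "conj_exp p = (if p = \<infinity> then 1 else if p = 1 then \<infinity>
                 else ereal (real_of_ereal p / (real_of_ereal p - 1)))"

definition epowr :: "ennreal \<Rightarrow> real \<Rightarrow> ennreal" where
  "epowr x a = (if x = \<top> then \<top> else ennreal (enn2real x powr a))"

definition Lp_norm :: "'a measure \<Rightarrow> ereal \<Rightarrow> ('a \<Rightarrow> ennreal) \<Rightarrow> ennreal" where
  "Lp_norm M p g = (if p = \<infinity> then esssup M g
     else epowr (\<integral>\<^sup>+ x. epowr (g x) (real_of_ereal p) \<partial>M) (1 / real_of_ereal p))"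

definition wnorm :: "'a measure \<Rightarrow> ereal \<Rightarrow> ('a \<Rightarrow> real) \<Rightarrow> ('a \<Rightarrow> real) \<Rightarrow> ennreal" where
  "wnorm M p w f = Lp_norm M p (\<lambda>x. ennreal (\<bar>f x\<bar> * w x))"

definition Lpw :: "'a measure \<Rightarrow> ereal \<Rightarrow> ('a \<Rightarrow> real) \<Rightarrow> ('a \<Rightarrow> real) set" where
  "Lpw M p w = {f. f \<in> borel_measurable M \<and> wnorm M p w f < \<top>}"

definition is_weight :: "'a measure \<Rightarrow> ('a \<Rightarrow> real) \<Rightarrow> bool" where
  "is_weight M w \<longleftrightarrow> w \<in> borel_measurable M \<and> (\<forall>x\<in>space M. 0 < w x)"

definition is_basis :: "'a measure \<Rightarrow> 'a set set \<Rightarrow> bool" where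
  "is_basis M \<U> \<longleftrightarrow> countable \<U> \<and>
     (\<forall>U\<in>\<U>. U \<in> sets M \<and> 0 < emeasure M U \<and> emeasure M U < \<infinity>) \<and>
     \<Union>\<U> = space M \<and>
     (\<forall>x\<in>space M. \<forall>y\<in>space M. \<exists>U\<in>\<U>. x \<in> U \<and> y \<in> U)"

definition apc :: "'a measure \<Rightarrow> 'a set set \<Rightarrow> ereal \<Rightarrow> ereal \<Rightarrow> ('a \<Rightarrow> real) \<Rightarrow> ('a \<Rightarrow> real) \<Rightarrow> ennreal" where
  "apc M \<U> s r w v = (SUP U\<in>\<U>.
      ennreal (measure M U powr (- inv_exp s - inv_exp r))
      * Lp_norm (restrict_space M U) s (\<lambda>x. ennreal (w x))
      * Lp_norm (restrict_space M U) r (\<lambda>x. ennreal (1 / v x)))"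

definition apc_p :: "'a measure \<Rightarrow> 'a set set \<Rightarrow> ereal \<Rightarrow> ('a \<Rightarrow> real) \<Rightarrow> ennreal" where
  "apc_p M \<U> p w = apc M \<U> p (conj_exp p) w w"

definition maxop :: "'a measure \<Rightarrow> 'a set set \<Rightarrow> ('a \<Rightarrow> real) \<Rightarrow> 'a \<Rightarrow> ennreal" where
  "maxop M \<U> f x = (SUP U\<in>{U\<in>\<U>. x \<in> U}.
      ennreal (1 / measure M U) * (\<integral>\<^sup>+ y\<in>U. ennreal \<bar>f y\<bar> \<partial>M))"

definition maxop_norm :: "'a measure \<Rightarrow> 'a set set \<Rightarrow> ereal \<Rightarrow> ('a \<Rightarrow> real) \<Rightarrow> ennreal" where
  "maxop_norm M \<U> t v = (SUP f\<in>{f. f \<in> borel_measurable M \<and> wnorm M t v f \<le> 1}.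
      Lp_norm M t (\<lambda>x. maxop M \<U> f x * ennreal (v x)))"

end

theory Submission
  imports Defs
begin


lemma epowr_top[simp]: "epowr \<top> a = \<top>" by (simp add: epowr_def)
lemma epowr_ennreal[simp]: "0 \<le> c \<Longrightarrow> epowr (ennreal c) a = ennreal (c powr a)"
  by (simp add: epowr_def)
lemma epowr_0[simp]: "epowr 0 a = 0" by (simp add: epowr_def)
lemma epowr_1[simp]: "epowr x 1 = x"
  by (cases x) (auto simp: epowr_def)
lemma epowr_mono: "x \<le> y \<Longrightarrow> 0 \<le> a \<Longrightarrow> epowr x a \<le> epowr y a"
  apply (cases "y = \<top>") apply (simp add: epowr_def)
  apply (cases x; cases y) apply (auto simp: epowr_def top_unique intro!: powr_mono2 ennreal_leI)
  done
lemma epowr_epowr: "epowr (epowr x a) b = epowr x (a*b)"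
  by (cases x) (auto simp: epowr_def powr_powr)
lemma epowr_mult: "0 < a \<Longrightarrow> epowr (x*y) a = epowr x a * epowr y a"
  apply (cases x; cases y)
  apply (auto simp: epowr_def ennreal_mult[symmetric] powr_mult ennreal_mult_top ennreal_top_mult)
  done
lemma epowr_inv: "a \<noteq> 0 \<Longrightarrow> epowr (epowr x a) (1/a) = x"
  by (simp add: epowr_epowr)
lemma epowr_inv': "a \<noteq> 0 \<Longrightarrow> epowr (epowr x (1/a)) a = x"
  by (simp add: epowr_epowr)
lemma epowr_le_iff: assumes "0 < a" shows "epowr x a \<le> epowr y a \<longleftrightarrow> x \<le> y"
proof
  assume "epowr x a \<le> epowr y a"
  then have "epowr (epowr x a) (1/a) \<le> epowr (epowr y a) (1/a)" by (rule epowr_mono) (use assms in auto)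
  then show "x \<le> y" using assms epowr_inv[of a x] epowr_inv[of a y] by simp
next
  assume "x \<le> y" then show "epowr x a \<le> epowr y a" using assms by (intro epowr_mono) auto
qed
lemma epowr_less_iff: "0 < a \<Longrightarrow> epowr x a < epowr y a \<longleftrightarrow> x < y"
  by (meson epowr_le_iff not_le)
lemma epowr_eq_top_iff[simp]: "epowr x a = \<top> \<longleftrightarrow> x = \<top>"
  by (cases x) (auto simp: epowr_def)
lemma epowr_less_top_iff[simp]: "epowr x a < \<top> \<longleftrightarrow> x < \<top>"
  by (metis epowr_eq_top_iff less_top)
lemma epowr_eq_0_iff[simp]: "epowr x a = 0 \<longleftrightarrow> x = 0"
  by (cases x) (auto simp: epowr_def)
lemma epowr_pos_iff[simp]: "0 < epowr x a \<longleftrightarrow> 0 < x"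
  by (metis epowr_eq_0_iff not_gr_zero)

lemma measurable_epowr[measurable]:
  assumes [measurable]: "f \<in> borel_measurable M" shows "(\<lambda>x. epowr (f x) a) \<in> borel_measurable M"
proof -
  have "(\<lambda>x. if f x = \<top> then \<top> else ennreal (enn2real (f x) powr a)) \<in> borel_measurable M"
    by measurable
  then show ?thesis unfolding epowr_def .
qed

lemma epowr_SUP:
  assumes "0 < a" "I \<noteq> {}"
  shows "epowr (SUP i\<in>I. f i) a = (SUP i\<in>I. epowr (f i) a)"
proof (rule antisym)
  show "(SUP i\<in>I. epowr (f i) a) \<le> epowr (SUP i\<in>I. f i) a"
    using assms by (auto intro!: SUP_least epowr_mono SUP_upper)
  let ?S = "SUP i\<in>I. epowr (f i) a"
  have "f i \<le> epowr ?S (1/a)" if "i \<in> I" for i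
  proof -
    have "epowr (f i) a \<le> ?S" using that by (rule SUP_upper)
    then have "epowr (epowr (f i) a) (1/a) \<le> epowr ?S (1/a)"
      using assms by (intro epowr_mono) auto
    then show ?thesis using assms by (simp add: epowr_inv)
  qed
  then have "(SUP i\<in>I. f i) \<le> epowr ?S (1/a)" by (rule SUP_least)
  then have "epowr (SUP i\<in>I. f i) a \<le> epowr (epowr ?S (1/a)) a"
    using assms by (intro epowr_mono) auto
  then show "epowr (SUP i\<in>I. f i) a \<le> ?S" using assms by (simp add: epowr_inv')
qed

section \<open>Lp norms\<close>

lemma Lp_real: "Lp_norm N (ereal p) f = epowr (\<integral>\<^sup>+x. epowr (f x) p \<partial>N) (1/p)"
  by (simp add: Lp_norm_def)

lemma Lp_cong: "(\<And>x. x \<in> space N \<Longrightarrow> f x = g x) \<Longrightarrow> Lp_norm N (ereal p) f = Lp_norm N (ereal p) g"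
  unfolding Lp_real by (metis (mono_tags, lifting) nn_integral_cong)

lemma Lp_mono_AE: "AE x in N. f x \<le> g x \<Longrightarrow> 0 \<le> p \<Longrightarrow> Lp_norm N (ereal p) f \<le> Lp_norm N (ereal p) g"
  unfolding Lp_real
  by (intro epowr_mono nn_integral_mono_AE) (auto elim!: eventually_mono intro: epowr_mono)

lemma Lp_mono: "(\<And>x. x \<in> space N \<Longrightarrow> f x \<le> g x) \<Longrightarrow> 0 \<le> p \<Longrightarrow> Lp_norm N (ereal p) f \<le> Lp_norm N (ereal p) g"
  by (intro Lp_mono_AE) auto

lemma Lp_cong_AE: "AE x in N. f x = g x \<Longrightarrow> 0 \<le> p \<Longrightarrow> Lp_norm N (ereal p) f = Lp_norm N (ereal p) g"
  by (intro antisym Lp_mono_AE) (auto elim!: eventually_mono)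

lemma Lp_cmult:
  assumes "f \<in> borel_measurable N" "0 < p"
  shows "Lp_norm N (ereal p) (\<lambda>x. c * f x) = c * Lp_norm N (ereal p) f"
proof -
  have "(\<integral>\<^sup>+x. epowr (c * f x) p \<partial>N) = epowr c p * (\<integral>\<^sup>+x. epowr (f x) p \<partial>N)"
    using assms by (simp add: epowr_mult nn_integral_cmult)
  then show ?thesis using assms
    by (simp add: Lp_real epowr_mult epowr_epowr)
qed

lemma Lp_zero_iff:
  assumes "f \<in> borel_measurable N" "0 < p"
  shows "Lp_norm N (ereal p) f = 0 \<longleftrightarrow> (AE x in N. f x = 0)"
  using assms by (simp add: Lp_real nn_integral_0_iff_AE)

lemma Lp_epowr:
  assumes "0 < a" "0 < \<theta>"
  shows "Lp_norm N (ereal a) (\<lambda>x. epowr (f x) \<theta>) = epowr (Lp_norm N (ereal (a*\<theta>)) f) \<theta>"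
  using assms by (simp add: Lp_real epowr_epowr mult.commute)

lemma Lp_one: "Lp_norm N (ereal 1) f = (\<integral>\<^sup>+x. f x \<partial>N)"
  by (simp add: Lp_real)

lemma Lp_finite_AE:
  assumes "f \<in> borel_measurable N" "Lp_norm N (ereal p) f < \<top>"
  shows "AE x in N. f x < \<top>"
proof -
  have "(\<integral>\<^sup>+x. epowr (f x) p \<partial>N) \<noteq> \<infinity>" using assms(2) by (simp add: Lp_real)
  from nn_integral_PInf_AE[OF _ this] assms(1) show ?thesis
    by (auto elim!: eventually_mono simp: less_top)
qed

section \<open>Hoelder\<close>

lemma young_real:
  fixes x y A B \<alpha> \<beta> :: real
  assumes "0 \<le> x" "0 \<le> y" "0 < A" "0 < B" "0 \<le> \<alpha>" "0 \<le> \<beta>" "\<alpha> + \<beta> = 1"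
  shows "x powr \<alpha> * y powr \<beta> \<le> A powr \<alpha> * B powr \<beta> * (\<alpha> * x / A + \<beta> * y / B)"
proof (cases "x = 0 \<or> y = 0")
  case True
  then show ?thesis using assms by (auto intro!: mult_nonneg_nonneg add_nonneg_nonneg)
next
  case False
  then have xy: "0 < x" "0 < y" using assms by auto
  have "(x/A) powr \<alpha> * (y/B) powr \<beta> \<le> \<alpha> * (x/A) + \<beta> * (y/B)"
    using assms xy by (intro Youngs_inequality_0) auto
  then have "A powr \<alpha> * B powr \<beta> * ((x/A) powr \<alpha> * (y/B) powr \<beta>)
      \<le> A powr \<alpha> * B powr \<beta> * (\<alpha> * (x/A) + \<beta> * (y/B))"
    by (intro mult_left_mono) auto
  moreover have "A powr \<alpha> * B powr \<beta> * ((x/A) powr \<alpha> * (y/B) powr \<beta>) = x powr \<alpha> * y powr \<beta>"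
    using assms xy by (simp add: powr_divide field_simps)
  ultimately show ?thesis by simp
qed

lemma young_enn:
  fixes X Y :: ennreal and A B \<alpha> \<beta> :: real
  assumes "0 < A" "0 < B" "0 < \<alpha>" "0 < \<beta>" "\<alpha> + \<beta> = 1"
  shows "epowr X \<alpha> * epowr Y \<beta> \<le> ennreal (A powr \<alpha> * B powr \<beta>) *
            (ennreal (\<alpha> / A) * X + ennreal (\<beta> / B) * Y)"
proof (cases "X = \<top> \<or> Y = \<top>")
  case True
  have pos: "0 < A powr \<alpha> * B powr \<beta>" "0 < \<alpha> / A" "0 < \<beta> / B" using assms by auto
  show ?thesis
  proof (cases "X = 0 \<or> Y = 0")
    case True then show ?thesis by auto
  next
    case False
    then show ?thesis using True pos
      by (auto simp: ennreal_mult_top ennreal_top_mult)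
  qed
next
  case False
  then obtain x y where xy: "X = ennreal x" "Y = ennreal y" "0 \<le> x" "0 \<le> y"
    by (metis ennreal_cases)
  have "x powr \<alpha> * y powr \<beta> \<le> A powr \<alpha> * B powr \<beta> * (\<alpha> * x / A + \<beta> * y / B)"
    using assms xy by (intro young_real) auto
  then have le: "x powr \<alpha> * y powr \<beta> \<le> A powr \<alpha> * B powr \<beta> * ((\<alpha>/A) * x + (\<beta>/B) * y)"
    by simp
  have e1: "epowr X \<alpha> * epowr Y \<beta> = ennreal (x powr \<alpha> * y powr \<beta>)"
    using xy by (simp add: ennreal_mult)
  have e2: "ennreal (A powr \<alpha> * B powr \<beta>) * (ennreal (\<alpha> / A) * X + ennreal (\<beta> / B) * Y)
      = ennreal (A powr \<alpha> * B powr \<beta> * ((\<alpha>/A) * x + (\<beta>/B) * y))"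
  proof -
    have h1: "ennreal (\<alpha> / A) * X = ennreal (\<alpha>*x/A)" "ennreal (\<beta> / B) * Y = ennreal (\<beta>*y/B)"
      using xy assms by (simp_all add: ennreal_mult[symmetric])
    show ?thesis unfolding h1 using xy assms by (simp add: ennreal_mult ennreal_plus)
  qed
  show ?thesis unfolding e1 e2 using le by (rule ennreal_leI)
qed


lemma holder_int:
  assumes f[measurable]: "f \<in> borel_measurable N" and g[measurable]: "g \<in> borel_measurable N"
    and ab: "0 < \<alpha>" "0 < \<beta>" "\<alpha> + \<beta> = 1"
  shows "(\<integral>\<^sup>+x. epowr (f x) \<alpha> * epowr (g x) \<beta> \<partial>N)
           \<le> epowr (\<integral>\<^sup>+x. f x \<partial>N) \<alpha> * epowr (\<integral>\<^sup>+x. g x \<partial>N) \<beta>"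
proof -
  define A where "A = (\<integral>\<^sup>+x. f x \<partial>N)"
  define B where "B = (\<integral>\<^sup>+x. g x \<partial>N)"
  have "(\<integral>\<^sup>+x. epowr (f x) \<alpha> * epowr (g x) \<beta> \<partial>N) \<le> epowr A \<alpha> * epowr B \<beta>"
  proof (cases "A = 0 \<or> B = 0")
    case True
    then have "AE x in N. epowr (f x) \<alpha> * epowr (g x) \<beta> = 0"
    proof
      assume "A = 0"
      then have "AE x in N. f x = 0" unfolding A_def using nn_integral_0_iff_AE[OF f] by simp
      then show ?thesis by (auto elim!: eventually_mono)
    next
      assume "B = 0"
      then have "AE x in N. g x = 0" unfolding B_def using nn_integral_0_iff_AE[OF g] by simp
      then show ?thesis by (auto elim!: eventually_mono)
    qed
    then have "(\<integral>\<^sup>+x. epowr (f x) \<alpha> * epowr (g x) \<beta> \<partial>N) = 0"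
      by (subst nn_integral_0_iff_AE) auto
    then show ?thesis by simp
  next
    case False
    note nz = this
    show ?thesis
    proof (cases "A = \<top> \<or> B = \<top>")
      case True
      then have "epowr A \<alpha> * epowr B \<beta> = \<top>" using nz
        by (auto simp: ennreal_top_mult ennreal_mult_top)
      then show ?thesis by simp
    next
      case False
      then obtain a' b' where ab': "A = ennreal a'" "B = ennreal b'" "0 < a'" "0 < b'"
        using nz by (metis ennreal_cases ennreal_eq_0_iff not_le)
      have "(\<integral>\<^sup>+x. epowr (f x) \<alpha> * epowr (g x) \<beta> \<partial>N)
          \<le> (\<integral>\<^sup>+x. ennreal (a' powr \<alpha> * b' powr \<beta>) *
                (ennreal (\<alpha> / a') * f x + ennreal (\<beta> / b') * g x) \<partial>N)"
        using ab ab' by (intro nn_integral_mono young_enn) auto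
      also have "\<dots> = ennreal (a' powr \<alpha> * b' powr \<beta>) *
                (ennreal (\<alpha> / a') * A + ennreal (\<beta> / b') * B)"
        unfolding A_def B_def by (simp add: nn_integral_cmult nn_integral_add)
      also have "ennreal (\<alpha> / a') * A + ennreal (\<beta> / b') * B = 1"
        using ab ab' by (simp add: ennreal_mult[symmetric] ennreal_plus[symmetric] del: ennreal_plus)
      also have "ennreal (a' powr \<alpha> * b' powr \<beta>) * 1 = epowr A \<alpha> * epowr B \<beta>"
        using ab' by (simp add: ennreal_mult)
      finally show ?thesis by simp
    qed
  qed
  then show ?thesis by (simp add: A_def B_def)
qed

lemma Lp_holder:
  assumes f[measurable]: "f \<in> borel_measurable N" and g[measurable]: "g \<in> borel_measurable N"
    and abc: "0 < a" "0 < b" "0 < c" "1/a = 1/b + 1/c"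
  shows "Lp_norm N (ereal a) (\<lambda>x. f x * g x) \<le> Lp_norm N (ereal b) f * Lp_norm N (ereal c) g"
proof -
  define \<alpha> where "\<alpha> = a/b"
  define \<beta> where "\<beta> = a/c"
  have ab: "0 < \<alpha>" "0 < \<beta>" "\<alpha> + \<beta> = 1"
    using abc unfolding \<alpha>_def \<beta>_def by (auto simp: field_simps)
  have pt: "epowr (f x * g x) a = epowr (epowr (f x) b) \<alpha> * epowr (epowr (g x) c) \<beta>" for x
    using abc unfolding \<alpha>_def \<beta>_def by (simp add: epowr_mult epowr_epowr)
  have "(\<integral>\<^sup>+x. epowr (f x * g x) a \<partial>N)
      \<le> epowr (\<integral>\<^sup>+x. epowr (f x) b \<partial>N) \<alpha> * epowr (\<integral>\<^sup>+x. epowr (g x) c \<partial>N) \<beta>"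
    unfolding pt by (rule holder_int) (use ab in auto)
  then have "epowr (\<integral>\<^sup>+x. epowr (f x * g x) a \<partial>N) (1/a)
      \<le> epowr (epowr (\<integral>\<^sup>+x. epowr (f x) b \<partial>N) \<alpha> * epowr (\<integral>\<^sup>+x. epowr (g x) c \<partial>N) \<beta>) (1/a)"
    by (rule epowr_mono) (use abc in auto)
  also have "\<dots> = Lp_norm N (ereal b) f * Lp_norm N (ereal c) g"
  proof -
    have e: "a / b * (1 / a) = 1/b" "a/c*(1/a) = 1/c" using abc(1) by auto
    have pa: "0 < 1/a" using abc(1) by simp
    show ?thesis unfolding \<alpha>_def \<beta>_def Lp_real
      by (simp only: epowr_mult[OF pa] epowr_epowr e)
  qed
  finally show ?thesis by (simp add: Lp_real)
qed




lemma epowr_one_base[simp]: "epowr 1 a = 1" by (simp add: epowr_def)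

lemma jensen_sum:
  fixes a :: "nat \<Rightarrow> real" and Y :: "nat \<Rightarrow> ennreal"
  assumes a: "\<And>k. 0 \<le> a k" and a1: "(\<Sum>k. ennreal (a k)) = 1" and t: "1 < t"
  shows "epowr (\<Sum>k. ennreal (a k) * Y k) t \<le> (\<Sum>k. ennreal (a k) * epowr (Y k) t)"
proof -
  define t' where "t' = t / (t - 1)"
  have t': "0 < t'" "1/1 = 1/t' + 1/t" using t unfolding t'_def by (auto simp: field_simps)
  define f where "f k = epowr (ennreal (a k)) (1/t')" for k
  define g where "g k = epowr (ennreal (a k)) (1/t) * Y k" for k
  have fg: "f k * g k = ennreal (a k) * Y k" for k
  proof -
    have "f k * g k = ennreal (a k powr (1/t') * a k powr (1/t)) * Y k"
      unfolding f_def g_def using a[of k] by (simp add: ennreal_mult mult.assoc)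
    also have "a k powr (1/t') * a k powr (1/t) = a k"
      using t'(2) a[of k] by (simp add: powr_add[symmetric])
    finally show ?thesis .
  qed
  have "Lp_norm (count_space UNIV) (ereal 1) (\<lambda>k. f k * g k)
     \<le> Lp_norm (count_space UNIV) (ereal t') f * Lp_norm (count_space UNIV) (ereal t) g"
    by (rule Lp_holder) (use t t' in auto)
  moreover have "Lp_norm (count_space UNIV) (ereal 1) (\<lambda>k. f k * g k) = (\<Sum>k. ennreal (a k) * Y k)"
    by (simp add: Lp_one fg nn_integral_count_space_nat)
  moreover have "Lp_norm (count_space UNIV) (ereal t') f = 1"
  proof -
    have "epowr (f k) t' = ennreal (a k)" for k
      unfolding f_def using t' by (simp add: epowr_epowr)
    then show ?thesis using a1 by (simp add: Lp_real nn_integral_count_space_nat)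
  qed
  moreover have "Lp_norm (count_space UNIV) (ereal t) g = epowr (\<Sum>k. ennreal (a k) * epowr (Y k) t) (1/t)"
  proof -
    have "epowr (g k) t = ennreal (a k) * epowr (Y k) t" for k
      unfolding g_def using t by (simp add: epowr_epowr epowr_mult)
    then show ?thesis by (simp add: Lp_real nn_integral_count_space_nat)
  qed
  ultimately have "(\<Sum>k. ennreal (a k) * Y k) \<le> epowr (\<Sum>k. ennreal (a k) * epowr (Y k) t) (1/t)"
    by simp
  then have "epowr (\<Sum>k. ennreal (a k) * Y k) t \<le> epowr (epowr (\<Sum>k. ennreal (a k) * epowr (Y k) t) (1/t)) t"
    by (rule epowr_mono) (use t in auto)
  also have "\<dots> = (\<Sum>k. ennreal (a k) * epowr (Y k) t)" using t by (simp add: epowr_inv')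
  finally show ?thesis .
qed


section \<open>Maximal operator\<close>

lemma basis_sets: "is_basis M \<U> \<Longrightarrow> U \<in> \<U> \<Longrightarrow> U \<in> sets M"
  by (auto simp: is_basis_def)

lemma basis_meas: "is_basis M \<U> \<Longrightarrow> U \<in> \<U> \<Longrightarrow> 0 < measure M U"
  by (auto simp: is_basis_def measure_def enn2real_positive_iff less_top)

lemma basis_emeas: "is_basis M \<U> \<Longrightarrow> U \<in> \<U> \<Longrightarrow> emeasure M U = ennreal (measure M U)"
  by (auto simp: is_basis_def emeasure_eq_ennreal_measure less_top)

lemma maxop_cmult:
  assumes "is_basis M \<U>" "f \<in> borel_measurable M" "0 \<le> c"
  shows "maxop M \<U> (\<lambda>y. c * f y) x = ennreal c * maxop M \<U> f x"
proof -
  have eq: "(\<integral>\<^sup>+y\<in>U. ennreal \<bar>c * f y\<bar> \<partial>M) = ennreal c * (\<integral>\<^sup>+y\<in>U. ennreal \<bar>f y\<bar> \<partial>M)" if "U \<in> \<U>" for U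
  proof -
    have Um: "U \<in> sets M" using basis_sets[OF assms(1) that] .
    have fm: "(\<lambda>y. ennreal \<bar>f y\<bar>) \<in> borel_measurable M" using assms(2) by measurable
    have m: "(\<lambda>y. ennreal \<bar>f y\<bar> * indicator U y) \<in> borel_measurable M"
      using fm borel_measurable_indicator[OF Um] by (rule borel_measurable_times_ennreal)
    have "(\<integral>\<^sup>+y\<in>U. ennreal \<bar>c * f y\<bar> \<partial>M) = (\<integral>\<^sup>+y. ennreal c * (ennreal \<bar>f y\<bar> * indicator U y) \<partial>M)"
      using assms(3) by (intro nn_integral_cong) (simp add: abs_mult ennreal_mult mult.assoc)
    also have "\<dots> = ennreal c * (\<integral>\<^sup>+y\<in>U. ennreal \<bar>f y\<bar> \<partial>M)"
      using m by (rule nn_integral_cmult)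
    finally show ?thesis .
  qed
  show ?thesis unfolding maxop_def SUP_mult_left_ennreal
    by (intro SUP_cong refl) (simp add: eq mult.left_commute)
qed

lemma maxop_cong_AE:
  assumes "AE y in M. \<bar>f y\<bar> = \<bar>g y\<bar>"
  shows "maxop M \<U> f x = maxop M \<U> g x"
proof -
  have "(\<integral>\<^sup>+y\<in>U. ennreal \<bar>f y\<bar> \<partial>M) = (\<integral>\<^sup>+y\<in>U. ennreal \<bar>g y\<bar> \<partial>M)" for U
    using assms by (intro nn_integral_cong_AE) (auto elim!: eventually_mono)
  then show ?thesis unfolding maxop_def by simp
qed

lemma maxop_lower:
  "U \<in> \<U> \<Longrightarrow> x \<in> U \<Longrightarrow> ennreal (1 / measure M U) * (\<integral>\<^sup>+y\<in>U. ennreal \<bar>f y\<bar> \<partial>M) \<le> maxop M \<U> f x"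
  unfolding maxop_def by (rule SUP_upper) auto

lemma maxop_zero_AE:
  assumes "AE y in M. f y = 0" shows "maxop M \<U> f x = 0"
proof -
  have "maxop M \<U> f x = maxop M \<U> (\<lambda>_. 0) x"
    using assms by (intro maxop_cong_AE) (auto elim!: eventually_mono)
  also have "\<dots> = 0" unfolding maxop_def by (intro antisym SUP_least) auto
  finally show ?thesis .
qed

lemma maxop_measurable[measurable]:
  assumes "is_basis M \<U>" shows "maxop M \<U> f \<in> borel_measurable M"
proof -
  define C where "C U = ennreal (1 / measure M U) * (\<integral>\<^sup>+y\<in>U. ennreal \<bar>f y\<bar> \<partial>M)" for U
  have eq: "maxop M \<U> f x = (SUP U\<in>\<U>. C U * indicator U x)" for x
  proof (rule antisym)
    show "maxop M \<U> f x \<le> (SUP U\<in>\<U>. C U * indicator U x)"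
      unfolding maxop_def C_def[symmetric]
      by (rule SUP_least) (auto intro!: SUP_upper2)
    show "(SUP U\<in>\<U>. C U * indicator U x) \<le> maxop M \<U> f x"
    proof (rule SUP_least)
      fix U assume "U \<in> \<U>"
      then show "C U * indicator U x \<le> maxop M \<U> f x"
        unfolding C_def by (cases "x \<in> U") (auto intro: maxop_lower)
    qed
  qed
  have "countable \<U>" using assms by (simp add: is_basis_def)
  have "(\<lambda>x. SUP U\<in>\<U>. C U * indicator U x) \<in> borel_measurable M"
    using \<open>countable \<U>\<close> basis_sets[OF assms] by measurable
  then show ?thesis unfolding eq[abs_def] .
qed

lemma maxop_bound:
  assumes basis: "is_basis M \<U>" and f[measurable]: "f \<in> borel_measurable M"
    and v: "is_weight M v" and t: "0 < t"
    and fin: "wnorm M (ereal t) v f < \<top>"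
  shows "Lp_norm M (ereal t) (\<lambda>x. maxop M \<U> f x * ennreal (v x))
          \<le> maxop_norm M \<U> (ereal t) v * wnorm M (ereal t) v f"
proof -
  have v_meas[measurable]: "v \<in> borel_measurable M" and vpos: "\<And>x. x \<in> space M \<Longrightarrow> 0 < v x"
    using v by (auto simp: is_weight_def)
  define W where "W = wnorm M (ereal t) v f"
  show ?thesis
  proof (cases "W = 0")
    case True
    then have "AE x in M. ennreal (\<bar>f x\<bar> * v x) = 0"
      unfolding W_def wnorm_def using t by (subst (asm) Lp_zero_iff) auto
    moreover have "AE x in M. 0 < v x" using vpos by (rule AE_I2)
    ultimately have "AE x in M. f x = 0"
      by eventually_elim (auto simp: mult_le_0_iff)
    then have "maxop M \<U> f x = 0" for x by (rule maxop_zero_AE)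
    then show ?thesis using t by (simp add: Lp_real)
  next
    case False
    then obtain W' where W': "W = ennreal W'" "0 < W'"
      using fin unfolding W_def[symmetric]
      by (metis ennreal_cases ennreal_eq_0_iff less_top not_le)
    define g where "g y = (1/W') * f y" for y
    have g_meas[measurable]: "g \<in> borel_measurable M" unfolding g_def by measurable
    have "wnorm M (ereal t) v g = ennreal (1/W') * W"
    proof -
      have "wnorm M (ereal t) v g = Lp_norm M (ereal t) (\<lambda>x. ennreal (1/W') * ennreal (\<bar>f x\<bar> * v x))"
        unfolding wnorm_def
      proof (intro Lp_cong)
        fix x assume "x \<in> space M"
        then have "0 \<le> \<bar>f x\<bar> * v x" using vpos[of x] by simp
        then show "ennreal (\<bar>g x\<bar> * v x) = ennreal (1/W') * ennreal (\<bar>f x\<bar> * v x)"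
          unfolding g_def using W' by (simp add: ennreal_mult[symmetric] abs_mult)
      qed
      also have "\<dots> = ennreal (1/W') * W"
        unfolding W_def wnorm_def using t by (intro Lp_cmult) auto
      finally show ?thesis .
    qed
    also have "\<dots> = 1" using W' by (simp add: ennreal_mult[symmetric])
    finally have "g \<in> {f. f \<in> borel_measurable M \<and> wnorm M (ereal t) v f \<le> 1}" by simp
    then have le: "Lp_norm M (ereal t) (\<lambda>x. maxop M \<U> g x * ennreal (v x)) \<le> maxop_norm M \<U> (ereal t) v"
      unfolding maxop_norm_def by (rule SUP_upper)
    have "Lp_norm M (ereal t) (\<lambda>x. maxop M \<U> f x * ennreal (v x))
        = Lp_norm M (ereal t) (\<lambda>x. ennreal W' * (maxop M \<U> g x * ennreal (v x)))"
    proof (intro Lp_cong)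
      fix x
      have "maxop M \<U> g x = ennreal (1/W') * maxop M \<U> f x"
        unfolding g_def using W' by (intro maxop_cmult basis f) auto
      then show "maxop M \<U> f x * ennreal (v x) = ennreal W' * (maxop M \<U> g x * ennreal (v x))"
        using W' by (simp add: ennreal_mult[symmetric] mult.assoc[symmetric])
    qed
    also have "\<dots> = ennreal W' * Lp_norm M (ereal t) (\<lambda>x. maxop M \<U> g x * ennreal (v x))"
      using t basis by (intro Lp_cmult) auto
    also have "\<dots> \<le> ennreal W' * maxop_norm M \<U> (ereal t) v"
      using le by (rule mult_left_mono) simp
    finally show ?thesis unfolding W_def[symmetric] W' by (simp add: mult.commute)
  qed
qed

lemma maxop_pos:
  assumes basis: "is_basis M \<U>" and f[measurable]: "f \<in> borel_measurable M"
    and E: "0 < emeasure M {y\<in>space M. f y \<noteq> 0}" and x: "x \<in> space M"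
  shows "0 < maxop M \<U> f x"
proof (rule ccontr)
  assume "\<not> 0 < maxop M \<U> f x"
  then have z: "maxop M \<U> f x = 0" by (simp add: not_gr_zero)
  define E where "E = {y\<in>space M. f y \<noteq> 0}"
  have E_sets[measurable]: "E \<in> sets M" unfolding E_def by measurable
  have cnt: "countable \<U>" using basis by (simp add: is_basis_def)
  have null: "emeasure M (U \<inter> E) = 0" if U: "U \<in> \<U>" "x \<in> U" for U
  proof -
    have U_sets[measurable]: "U \<in> sets M" using basis_sets[OF basis U(1)] .
    have "ennreal (1 / measure M U) * (\<integral>\<^sup>+y\<in>U. ennreal \<bar>f y\<bar> \<partial>M) = 0"
      using maxop_lower[OF U, of M f] z by simp
    moreover have "0 < measure M U" using basis_meas[OF basis U(1)] .
    ultimately have "(\<integral>\<^sup>+y. ennreal \<bar>f y\<bar> * indicator U y \<partial>M) = 0" by simp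
    then have "AE y in M. ennreal \<bar>f y\<bar> * indicator U y = 0"
      by (subst (asm) nn_integral_0_iff_AE) auto
    then have "AE y in M. y \<notin> U \<inter> E"
      by (auto elim!: eventually_mono simp: E_def indicator_def split: if_splits)
    then show ?thesis
      by (subst AE_iff_measurable[symmetric, where P="\<lambda>y. y \<notin> U \<inter> E"]) (auto simp: E_def)
  qed
  have "E \<subseteq> (\<Union>U\<in>{U\<in>\<U>. x \<in> U}. U \<inter> E)"
  proof
    fix y assume "y \<in> E"
    then have "y \<in> space M" by (simp add: E_def)
    then obtain U where "U \<in> \<U>" "x \<in> U" "y \<in> U" using basis x unfolding is_basis_def by blast
    then show "y \<in> (\<Union>U\<in>{U\<in>\<U>. x \<in> U}. U \<inter> E)" using \<open>y \<in> E\<close> by auto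
  qed
  moreover have "(\<Union>U\<in>{U\<in>\<U>. x \<in> U}. U \<inter> E) \<in> null_sets M"
    using cnt null basis_sets[OF basis]
    by (intro null_sets_UN') (auto intro: countable_subset)
  ultimately have "E \<in> null_sets M" using E_sets by (blast intro: null_sets_subset)
  then show False using E by (simp add: E_def null_sets_def)
qed




lemma ennreal_mult_nn: "0 \<le> a \<Longrightarrow> 0 \<le> b \<Longrightarrow> ennreal a * ennreal b = ennreal (a * b)"
  by (simp add: ennreal_mult)

lemma duality_inf:
  assumes sf: "sigma_finite_measure M" and F[measurable]: "F \<in> borel_measurable M"
    and Fnn: "\<And>x. x \<in> space M \<Longrightarrow> 0 \<le> F x" and q0: "0 < q0"
    and lam: "lv < esssup M (\<lambda>x. ennreal (F x))"
  shows "\<exists>u. u \<in> borel_measurable M \<and> (\<forall>x\<in>space M. 0 \<le> u x)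
     \<and> Lp_norm M (ereal q0) (\<lambda>x. ennreal (u x)) \<le> 1
     \<and> lv \<le> Lp_norm M (ereal q0) (\<lambda>x. ennreal (F x * u x))"
proof -
  define E where "E = {x\<in>space M. lv < ennreal (F x)}"
  have E_sets[measurable]: "E \<in> sets M" unfolding E_def by measurable
  have Epos: "0 < emeasure M E"
    unfolding E_def using lam by (intro esssup_pos_measure) auto
  obtain A :: "nat \<Rightarrow> 'a set" where A: "range A \<subseteq> sets M" "(\<Union>i. A i) = space M"
    "\<And>i. emeasure M (A i) \<noteq> \<infinity>" "incseq A"
    using sigma_finite_measure.sigma_finite_incseq[OF sf] by metis
  have "\<exists>n. 0 < emeasure M (E \<inter> A n)"
  proof (rule ccontr)
    assume "\<not> ?thesis"
    then have "\<And>n. emeasure M (E \<inter> A n) = 0" by (simp add: not_gr_zero)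
    then have "emeasure M (\<Union>n. E \<inter> A n) = 0" using A(1) by (intro emeasure_UN_eq_0) auto
    moreover have "(\<Union>n. E \<inter> A n) = E" using A(2) by (auto simp: E_def)
    ultimately show False using Epos by simp
  qed
  then obtain n where n: "0 < emeasure M (E \<inter> A n)" by blast
  define B where "B = E \<inter> A n"
  have B_sets[measurable]: "B \<in> sets M" unfolding B_def using A(1) by auto
  have "emeasure M B \<le> emeasure M (A n)" by (rule emeasure_mono) (use A(1) in \<open>auto simp: B_def\<close>)
  then have Bfin: "emeasure M B < \<top>"
    using A(3)[of n] by (auto simp: less_top top_unique)
  define m where "m = measure M B"
  have Bm: "emeasure M B = ennreal m" using Bfin by (simp add: m_def emeasure_eq_ennreal_measure less_top)
  have m: "0 < m" using n Bm by (simp add: B_def)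
  define u where "u x = m powr (-1/q0) * indicator B x" for x
  have u_meas[measurable]: "u \<in> borel_measurable M" unfolding u_def by measurable
  have unn: "0 \<le> u x" for x unfolding u_def by simp
  have u1: "Lp_norm M (ereal q0) (\<lambda>x. ennreal (u x)) = 1"
  proof -
    have "epowr (ennreal (u x)) q0 = ennreal (1/m) * indicator B x" for x
      using m q0 unfolding u_def by (auto simp: indicator_def powr_powr powr_minus_divide powr_divide)
    then have "(\<integral>\<^sup>+x. epowr (ennreal (u x)) q0 \<partial>M) = ennreal (1/m) * emeasure M B"
      by (simp add: nn_integral_cmult_indicator)
    also have "\<dots> = 1" using m by (simp add: Bm ennreal_mult[symmetric])
    finally show ?thesis by (simp add: Lp_real)
  qed
  have "Lp_norm M (ereal q0) (\<lambda>x. lv * ennreal (u x)) \<le> Lp_norm M (ereal q0) (\<lambda>x. ennreal (F x * u x))"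
  proof (rule Lp_mono)
    fix x assume x: "x \<in> space M"
    show "lv * ennreal (u x) \<le> ennreal (F x * u x)"
    proof (cases "x \<in> B")
      case True
      then have "lv < ennreal (F x)" by (simp add: B_def E_def)
      then have "lv * ennreal (u x) \<le> ennreal (F x) * ennreal (u x)" by (intro mult_right_mono) auto
      then show ?thesis using Fnn[OF x] unn by (simp add: ennreal_mult_nn)
    qed (simp add: u_def)
  qed (use q0 in auto)
  moreover have "Lp_norm M (ereal q0) (\<lambda>x. lv * ennreal (u x)) = lv"
    using q0 u1 by (subst Lp_cmult) auto
  ultimately show ?thesis using u1 unn by (intro exI[of _ u]) auto
qed

lemma pow_calc:
  fixes a I q q0 \<delta> :: real
  assumes a: "0 \<le> a" and I: "0 < I" and q: "0 < q" and q0: "0 < q0" and rel: "1/q = 1/q0 - \<delta>"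
  shows "(a * (a powr (q*\<delta>) * I powr (-\<delta>))) powr q0 = I powr (-\<delta>*q0) * a powr q"
proof (cases "a = 0")
  case True then show ?thesis using q0 by simp
next
  case False
  then have a: "0 < a" using a by simp
  have e: "q0 + q*\<delta>*q0 = q" using rel q q0 by (simp add: field_simps)
  have "(a * (a powr (q*\<delta>) * I powr (-\<delta>))) powr q0 = a powr q0 * a powr (q*\<delta>*q0) * I powr (-\<delta>*q0)"
    using a I by (simp add: powr_mult powr_powr)
  also have "a powr q0 * a powr (q*\<delta>*q0) = a powr q" by (simp add: powr_add[symmetric] e)
  finally show ?thesis by simp
qed

lemma duality_fin:
  assumes sf: "sigma_finite_measure M" and F[measurable]: "F \<in> borel_measurable M"
    and Fnn: "\<And>x. x \<in> space M \<Longrightarrow> 0 \<le> F x" and q: "0 < q" and q0: "0 < q0" and \<delta>: "0 < \<delta>"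
    and rel: "1/q = 1/q0 - \<delta>"
    and lam: "lv < Lp_norm M (ereal q) (\<lambda>x. ennreal (F x))"
  shows "\<exists>u. u \<in> borel_measurable M \<and> (\<forall>x\<in>space M. 0 \<le> u x)
     \<and> Lp_norm M (ereal (1/\<delta>)) (\<lambda>x. ennreal (u x)) \<le> 1
     \<and> lv \<le> Lp_norm M (ereal q0) (\<lambda>x. ennreal (F x * u x))"
proof -
  obtain A :: "nat \<Rightarrow> 'a set" where A: "range A \<subseteq> sets M" "(\<Union>i. A i) = space M"
    "\<And>i. emeasure M (A i) \<noteq> \<infinity>" "incseq A"
    using sigma_finite_measure.sigma_finite_incseq[OF sf] by metis
  have A_sets[measurable]: "A i \<in> sets M" for i using A(1) by auto
  define Fn where "Fn n x = min (F x) (real n) * indicator (A n) x" for n x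
  have Fn_meas[measurable]: "Fn n \<in> borel_measurable M" for n unfolding Fn_def by measurable
  have Fn_nn: "0 \<le> Fn n x" if "x \<in> space M" for n x
    using Fnn[OF that] unfolding Fn_def by (auto simp: indicator_def)
  have Fn_le: "Fn n x \<le> F x" if "x \<in> space M" for n x
    using Fnn[OF that] unfolding Fn_def by (auto simp: indicator_def)
  have inc: "incseq (\<lambda>n x. epowr (ennreal (Fn n x)) q)"
  proof (intro incseq_SucI le_funI)
    fix n x
    show "epowr (ennreal (Fn n x)) q \<le> epowr (ennreal (Fn (Suc n) x)) q"
    proof (cases "x \<in> A n")
      case True
      then have "x \<in> A (Suc n)" using A(4) by (auto simp: incseq_Suc_iff)
      then show ?thesis using True q unfolding Fn_def
        by (intro epowr_mono ennreal_leI) (auto simp: indicator_def)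
    next
      case False then show ?thesis unfolding Fn_def by simp
    qed
  qed
  have sup: "(SUP n. epowr (ennreal (Fn n x)) q) = epowr (ennreal (F x)) q" if x: "x \<in> space M" for x
  proof (rule antisym)
    show "(SUP n. epowr (ennreal (Fn n x)) q) \<le> epowr (ennreal (F x)) q"
      using Fn_le[OF x] q by (intro SUP_least epowr_mono ennreal_leI) auto
    obtain n1 where n1: "x \<in> A n1" using A(2) x by auto
    define n where "n = max n1 (nat \<lceil>F x\<rceil>)"
    have "x \<in> A n" using n1 A(4) unfolding n_def incseq_def by (meson max.cobounded1 subsetD)
    moreover have "F x \<le> real n"
    proof -
      have "F x \<le> real (nat \<lceil>F x\<rceil>)" by (rule real_nat_ceiling_ge)
      also have "\<dots> \<le> real n" unfolding n_def by simp
      finally show ?thesis .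
    qed
    ultimately have "Fn n x = F x" unfolding Fn_def by simp
    then show "epowr (ennreal (F x)) q \<le> (SUP n. epowr (ennreal (Fn n x)) q)"
      by (metis UNIV_I SUP_upper)
  qed
  have "(\<integral>\<^sup>+x. epowr (ennreal (F x)) q \<partial>M) = (\<integral>\<^sup>+x. (SUP n. epowr (ennreal (Fn n x)) q) \<partial>M)"
    using sup by (intro nn_integral_cong) auto
  also have "\<dots> = (SUP n. \<integral>\<^sup>+x. epowr (ennreal (Fn n x)) q \<partial>M)"
    using inc by (intro nn_integral_monotone_convergence_SUP) auto
  finally have intF: "(\<integral>\<^sup>+x. epowr (ennreal (F x)) q \<partial>M) = (SUP n. \<integral>\<^sup>+x. epowr (ennreal (Fn n x)) q \<partial>M)" .
  have "epowr lv q < epowr (Lp_norm M (ereal q) (\<lambda>x. ennreal (F x))) q"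
    using lam q by (simp add: epowr_less_iff)
  also have "\<dots> = (\<integral>\<^sup>+x. epowr (ennreal (F x)) q \<partial>M)" using q by (simp add: Lp_real epowr_inv')
  finally obtain n where n: "epowr lv q < (\<integral>\<^sup>+x. epowr (ennreal (Fn n x)) q \<partial>M)"
    unfolding intF less_SUP_iff by auto
  define I where "I = (\<integral>\<^sup>+x. epowr (ennreal (Fn n x)) q \<partial>M)"
  have "I \<le> (\<integral>\<^sup>+x. ennreal (real n powr q) * indicator (A n) x \<partial>M)"
    unfolding I_def using q Fnn
    by (intro nn_integral_mono) (auto simp: Fn_def indicator_def intro!: powr_mono2 ennreal_leI)
  also have "\<dots> = ennreal (real n powr q) * emeasure M (A n)"
    by (simp add: nn_integral_cmult_indicator)
  also have "\<dots> < \<top>" using A(3)[of n] by (simp add: ennreal_mult_less_top less_top)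
  finally have Ifin: "I < \<top>" .
  have Ipos: "0 < I" using n unfolding I_def by (metis not_gr_zero not_less_zero)
  obtain I' where I': "I = ennreal I'" "0 < I'" using Ifin Ipos
    by (metis ennreal_cases ennreal_less_zero_iff less_top)
  have lamI: "lv < Lp_norm M (ereal q) (\<lambda>x. ennreal (Fn n x))"
  proof -
    have "epowr (epowr lv q) (1/q) < epowr I (1/q)" using n q unfolding I_def by (simp add: epowr_less_iff)
    then show ?thesis using q by (simp add: Lp_real I_def epowr_inv)
  qed
  define u where "u x = Fn n x powr (q*\<delta>) * I' powr (-\<delta>)" for x
  have u_meas[measurable]: "u \<in> borel_measurable M" unfolding u_def by measurable
  have unn: "0 \<le> u x" for x unfolding u_def by simp
  have u1: "Lp_norm M (ereal (1/\<delta>)) (\<lambda>x. ennreal (u x)) = 1"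
  proof -
    have "epowr (ennreal (u x)) (1/\<delta>) = ennreal (1/I') * epowr (ennreal (Fn n x)) q" if "x \<in> space M" for x
    proof -
      have "u x powr (1/\<delta>) = Fn n x powr q * (1/I')"
        unfolding u_def using \<delta> I' Fn_nn[OF that]
        by (simp add: powr_mult powr_powr powr_minus_divide powr_divide)
      then show ?thesis using Fn_nn[OF that] unn I' by (simp add: ennreal_mult_nn mult.commute)
    qed
    then have "(\<integral>\<^sup>+x. epowr (ennreal (u x)) (1/\<delta>) \<partial>M) = (\<integral>\<^sup>+x. ennreal (1/I') * epowr (ennreal (Fn n x)) q \<partial>M)"
      by (intro nn_integral_cong) auto
    also have "\<dots> = ennreal (1/I') * I" unfolding I_def by (intro nn_integral_cmult) measurable
    also have "\<dots> = 1" using I' by (simp add: ennreal_mult_nn)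
    finally show ?thesis by (simp add: Lp_real)
  qed
  have "Lp_norm M (ereal q0) (\<lambda>x. ennreal (Fn n x * u x)) = Lp_norm M (ereal q) (\<lambda>x. ennreal (Fn n x))"
  proof -
    have "epowr (ennreal (Fn n x * u x)) q0 = ennreal (I' powr (-\<delta>*q0)) * epowr (ennreal (Fn n x)) q"
      if "x \<in> space M" for x
    proof -
      have "(Fn n x * u x) powr q0 = I' powr (-\<delta>*q0) * Fn n x powr q"
        unfolding u_def using Fn_nn[OF that] I' q q0 rel by (intro pow_calc) auto
      then show ?thesis using Fn_nn[OF that] unn by (simp add: ennreal_mult_nn)
    qed
    then have "(\<integral>\<^sup>+x. epowr (ennreal (Fn n x * u x)) q0 \<partial>M) = (\<integral>\<^sup>+x. ennreal (I' powr (-\<delta>*q0)) * epowr (ennreal (Fn n x)) q \<partial>M)"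
      by (intro nn_integral_cong) auto
    also have "\<dots> = ennreal (I' powr (-\<delta>*q0)) * I" unfolding I_def by (intro nn_integral_cmult) measurable
    also have "\<dots> = ennreal (I' powr (-\<delta>*q0) * I')" using I' by (simp add: ennreal_mult_nn)
    finally have e: "(\<integral>\<^sup>+x. epowr (ennreal (Fn n x * u x)) q0 \<partial>M) = ennreal (I' powr (-\<delta>*q0) * I')" .
    have "(I' powr (-\<delta>*q0) * I') powr (1/q0) = I' powr (1/q)"
    proof -
      have "(I' powr (-\<delta>*q0) * I') = I' powr (1 - \<delta>*q0)" using I' by (simp add: powr_diff powr_minus_divide)
      then have "(I' powr (-\<delta>*q0) * I') powr (1/q0) = I' powr ((1 - \<delta>*q0) * (1/q0))" by (simp add: powr_powr)
      also have "(1 - \<delta>*q0) * (1/q0) = 1/q" using rel q0 by (simp add: field_simps)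
      finally show ?thesis .
    qed
    then show ?thesis using e I' by (simp add: Lp_real I_def[symmetric])
  qed
  moreover have "Lp_norm M (ereal q0) (\<lambda>x. ennreal (Fn n x * u x)) \<le> Lp_norm M (ereal q0) (\<lambda>x. ennreal (F x * u x))"
    using Fn_le Fn_nn unn q0 by (intro Lp_mono ennreal_leI mult_right_mono) auto
  ultimately show ?thesis using lamI u1 unn by (intro exI[of _ u]) auto
qed




lemma inv_exp_ereal[simp]: "inv_exp (ereal x) = 1/x" by (simp add: inv_exp_def)
lemma inv_exp_inf[simp]: "inv_exp \<infinity> = 0" by (simp add: inv_exp_def)
lemma inv_exp_nonneg: "0 < p \<Longrightarrow> 0 \<le> inv_exp p"
  by (cases p) (auto simp: inv_exp_def)

locale extrap =
  fixes M :: "'a measure" and \<U> :: "'a set set" and s r s0 :: real and r0 :: ereal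
    and w :: "'a \<Rightarrow> real" and c :: "ereal \<Rightarrow> real"
  assumes basis: "is_basis M \<U>"
    and s_pos: "0 < s" and r_pos: "0 < r" and s0_pos: "0 < s0" and r0_pos: "0 < r0"
    and rel3: "1 / s - 1 / s0 = inv_exp r0 - 1 / r"
    and rel4: "inv_exp r0 - 1 / r < 0"
    and w_weight: "is_weight M w"
    and w_fin: "apc M \<U> (ereal s) (ereal r) w w < \<top>"
    and c_ge: "\<And>t. 1 < t \<Longrightarrow> 1 \<le> c t"
    and max_bd: "\<And>t v. 1 < t \<Longrightarrow> is_weight M v \<Longrightarrow>
        maxop_norm M \<U> t v \<le> ennreal (c t) * epowr (apc_p M \<U> t v) (real_of_ereal (conj_exp t))"
    and nonempty: "space M \<noteq> {}"
begin

definition "dlt = 1/r - inv_exp r0"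
definition "rho = 1/(1/s + 1/r)"
definition "tx = (1/s + 1/r)/(1/r)"
definition "txp = tx/(tx - 1)"
definition "bet = (1/s+1/r)*(1/r - inv_exp r0)/(1/r)"
definition "tht = r * inv_exp r0"
definition "Nw = enn2real (apc M \<U> (ereal s) (ereal r) w w)"
definition "vw x = w x powr (-rho)"
definition "ctt = c (ereal tx)"
definition "Nb = ctt * Nw powr s"

lemma w_meas[measurable]: "w \<in> borel_measurable M" using w_weight by (simp add: is_weight_def)
lemma w_pos: "x \<in> space M \<Longrightarrow> 0 < w x" using w_weight by (simp add: is_weight_def)

lemma ir0: "0 \<le> inv_exp r0" using r0_pos by (rule inv_exp_nonneg)

lemma params:
  shows "0 < dlt" "0 < rho" "1 < tx" "1 < txp" "0 < bet" "bet = tx * dlt" "0 \<le> tht" "tht = 1 - r * dlt"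
    "rho * tx = r" "rho * txp = s" "1/tx + 1/txp = 1" "rho * bet = r * dlt"
    "1/s0 = 1/s + dlt" "tht < 1" "1/s0 = bet + tht / s"
    "1/s0 + inv_exp r0 - bet = tht * (1/s + 1/r)" "s/s0 = s * bet + tht"
    "rho * (1/s + 1/r) = 1" "1/dlt = tx / bet"
proof -
  have ir: "inv_exp r0 < 1/r" using rel4 by simp
  show d: "0 < dlt" unfolding dlt_def using ir by simp
  have "0 < 1/s + 1/r" using s_pos r_pos by (simp add: add_pos_pos)
  then show "0 < rho" unfolding rho_def by simp
  show t1: "1 < tx" unfolding tx_def using s_pos r_pos by (simp add: field_simps)
  then show "1 < txp" unfolding txp_def by (simp add: field_simps)
  show bt: "bet = tx * dlt" unfolding bet_def tx_def dlt_def by simp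
  then show "0 < bet" using t1 d by simp
  show "0 \<le> tht" unfolding tht_def using ir0 r_pos by simp
  show th: "tht = 1 - r * dlt" unfolding tht_def dlt_def using r_pos by (simp add: field_simps)
  have "0 < 1/s + 1/r" using s_pos r_pos by (simp add: add_pos_pos)
  then have A: "1/s + 1/r \<noteq> 0" by linarith
  have rt: "rho = 1/(1/s + 1/r)" "tx = (1/s + 1/r) * r" unfolding rho_def tx_def by simp_all
  show "rho * tx = r" unfolding rt using A by simp
  show "rho * txp = s"
  proof -
    define A where "A = 1/s + 1/r"
    have A0: "A \<noteq> 0" using A unfolding A_def .
    have e1: "rho = 1/A" "tx = A * r" unfolding rt A_def by simp_all
    have "tx - 1 = r/s" unfolding rt using s_pos r_pos by (simp add: field_simps)
    then have "txp = (A * r) / (r/s)" unfolding txp_def e1 by simp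
    also have "\<dots> = A * s" using r_pos s_pos by simp
    finally show ?thesis using e1(1) A0 by simp
  qed
  show "1/tx + 1/txp = 1" unfolding txp_def using t1 by (simp add: field_simps)
  show "rho * bet = r * dlt"
  proof -
    define A where "A = 1/s + 1/r"
    have A0: "A \<noteq> 0" using A unfolding A_def .
    have "bet = A * dlt * r" "rho = 1/A" unfolding bet_def dlt_def A_def rho_def by simp_all
    then show ?thesis using A0 by simp
  qed
  show s0: "1/s0 = 1/s + dlt" unfolding dlt_def using rel3 by simp
  show "tht < 1" using th d r_pos by simp
  show "1/s0 = bet + tht / s" unfolding s0 bt th tx_def using s_pos r_pos by (simp add: field_simps)
  show "1/s0 + inv_exp r0 - bet = tht * (1/s + 1/r)"
    unfolding s0 bt tht_def tx_def dlt_def using s_pos r_pos by (simp add: field_simps)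
  show "s/s0 = s * bet + tht"
  proof -
    have a: "s/s0 = 1 + s*dlt" using s0 s_pos s0_pos by (simp add: field_simps)
    have "s * tx = s + r" unfolding rt using s_pos r_pos by (simp add: field_simps)
    then have b: "s*(tx*dlt) = s*dlt + r*dlt" by (metis distrib_right mult.assoc)
    show ?thesis unfolding a bt th using b by linarith
  qed
  show "rho * (1/s + 1/r) = 1" unfolding rt using A by simp
  show "1/dlt = tx / bet" unfolding bt using d t1 by simp
qed

lemma conj_tx: "conj_exp (ereal tx) = ereal txp"
  using params(3) unfolding conj_exp_def txp_def by simp

lemma vw_weight: "is_weight M vw"
  unfolding is_weight_def vw_def
  by (simp, metis less_irrefl w_pos)

lemma vw_meas[measurable]: "vw \<in> borel_measurable M" using vw_weight by (simp add: is_weight_def)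
lemma vw_pos: "x \<in> space M \<Longrightarrow> 0 < vw x" using vw_weight by (simp add: is_weight_def)

lemma Nw_eq: "apc M \<U> (ereal s) (ereal r) w w = ennreal Nw"
  using w_fin unfolding Nw_def by (simp add: less_top)

lemma sets_restrict_U: "U \<in> \<U> \<Longrightarrow> U \<inter> space M \<in> sets M"
  using basis_sets[OF basis] by auto

lemma space_restrict_U: "U \<in> \<U> \<Longrightarrow> x \<in> space (restrict_space M U) \<Longrightarrow> x \<in> space M"
  by (simp add: space_restrict_space)

lemma Nw_pos: "0 < Nw"
proof -
  obtain x where x: "x \<in> space M" using nonempty by auto
  then obtain U where U: "U \<in> \<U>" "x \<in> U" using basis unfolding is_basis_def by blast
  have Um: "U \<in> sets M" using basis_sets[OF basis U(1)] .
  have mU: "0 < measure M U" using basis_meas[OF basis U(1)] .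
  have eU: "0 < emeasure M U" using basis U(1) unfolding is_basis_def by auto
  have nz: "Lp_norm (restrict_space M U) (ereal p) (\<lambda>x. ennreal (f x)) \<noteq> 0"
    if p: "0 < p" and f: "f \<in> borel_measurable M" and fpos: "\<And>x. x \<in> space M \<Longrightarrow> 0 < f x" for p f
  proof
    assume "Lp_norm (restrict_space M U) (ereal p) (\<lambda>x. ennreal (f x)) = 0"
    moreover have "(\<lambda>x. ennreal (f x)) \<in> borel_measurable (restrict_space M U)"
      using f by (intro measurable_restrict_space1) measurable
    ultimately have "AE x in restrict_space M U. ennreal (f x) = 0" using p by (simp add: Lp_zero_iff)
    then have "AE x in M. x \<in> U \<longrightarrow> ennreal (f x) = 0"
      using sets_restrict_U[OF U(1)] by (simp add: AE_restrict_space_iff)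
    moreover have "AE x in M. x \<in> space M" by (rule AE_space)
    ultimately have "AE x in M. x \<notin> U" by eventually_elim (metis ennreal_eq_0_iff fpos not_le)
    then have "emeasure M U = 0"
      using Um by (subst (asm) AE_iff_measurable[OF _ refl]) (auto simp: sets.Int_space_eq2 Collect_conj_eq)
    then show False using eU by simp
  qed
  have "0 < ennreal (measure M U powr (- inv_exp (ereal s) - inv_exp (ereal r)))
      * Lp_norm (restrict_space M U) (ereal s) (\<lambda>x. ennreal (w x))
      * Lp_norm (restrict_space M U) (ereal r) (\<lambda>x. ennreal (1 / w x))"
    using nz[of s w] nz[of r "\<lambda>x. 1 / w x"] s_pos r_pos w_pos mU
    by (simp add: zero_less_iff_neq_zero)
  also have "\<dots> \<le> apc M \<U> (ereal s) (ereal r) w w"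
    unfolding apc_def using U(1) by (rule SUP_upper)
  finally show ?thesis using Nw_eq by simp
qed

end



lemma ennreal_single_le_suminf: "f k \<le> (\<Sum>i. f i :: ennreal)"
proof -
  have "sum f {k} \<le> suminf f" by (rule sum_le_suminf) auto
  then show ?thesis by simp
qed

lemma ennreal_suminf_shift_le: "(\<Sum>i. f (Suc i)) \<le> (\<Sum>i. f i :: ennreal)"
proof -
  have "(\<Sum>i<n. f (Suc i)) \<le> (\<Sum>i. f i)" for n
  proof -
    have e: "(\<Sum>i<Suc n. f i) = f 0 + (\<Sum>i<n. f (Suc i))" by (rule sum.lessThan_Suc_shift)
    have "(\<Sum>i<n. f (Suc i)) \<le> (\<Sum>i<Suc n. f i)" unfolding e by (intro add_increasing) auto
    also have "\<dots> \<le> (\<Sum>i. f i)" by (rule sum_le_suminf) auto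
    finally show ?thesis .
  qed
  then show ?thesis by (subst suminf_eq_SUP) (rule SUP_least)
qed

lemma fin_of_mult: "a * ennreal b < \<top> \<Longrightarrow> 0 < b \<Longrightarrow> a < (\<top>::ennreal)"
  by (auto simp: ennreal_mult_less_top)

context extrap begin

lemma stepA: "apc_p M \<U> (ereal tx) vw \<le> epowr (apc M \<U> (ereal s) (ereal r) w w) rho"
  unfolding apc_p_def conj_tx
proof (unfold apc_def, rule SUP_least)
  fix U assume U: "U \<in> \<U>"
  let ?R = "restrict_space M U"
  have sp: "x \<in> space ?R \<Longrightarrow> x \<in> space M" for x by (simp add: space_restrict_space)
  have e1: "Lp_norm ?R (ereal tx) (\<lambda>x. ennreal (vw x)) = epowr (Lp_norm ?R (ereal r) (\<lambda>x. ennreal (1 / w x))) rho"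
  proof -
    have "Lp_norm ?R (ereal tx) (\<lambda>x. ennreal (vw x)) = Lp_norm ?R (ereal tx) (\<lambda>x. epowr (ennreal (1 / w x)) rho)"
    proof (rule Lp_cong)
      fix x assume "x \<in> space ?R"
      then have "0 < w x" using w_pos sp by blast
      then show "ennreal (vw x) = epowr (ennreal (1 / w x)) rho"
        by (simp add: vw_def powr_minus_divide powr_divide)
    qed
    also have "\<dots> = epowr (Lp_norm ?R (ereal (tx * rho)) (\<lambda>x. ennreal (1 / w x))) rho"
      using params by (intro Lp_epowr) auto
    also have "tx * rho = r" using params(9) by (simp add: mult.commute)
    finally show ?thesis .
  qed
  have e2: "Lp_norm ?R (ereal txp) (\<lambda>x. ennreal (1 / vw x)) = epowr (Lp_norm ?R (ereal s) (\<lambda>x. ennreal (w x))) rho"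
  proof -
    have "Lp_norm ?R (ereal txp) (\<lambda>x. ennreal (1 / vw x)) = Lp_norm ?R (ereal txp) (\<lambda>x. epowr (ennreal (w x)) rho)"
    proof (rule Lp_cong)
      fix x assume "x \<in> space ?R"
      then have "0 < w x" using w_pos sp by blast
      then show "ennreal (1 / vw x) = epowr (ennreal (w x)) rho"
        by (simp add: vw_def powr_minus_divide)
    qed
    also have "\<dots> = epowr (Lp_norm ?R (ereal (txp * rho)) (\<lambda>x. ennreal (w x))) rho"
      using params by (intro Lp_epowr) auto
    also have "txp * rho = s" using params(10) by (simp add: mult.commute)
    finally show ?thesis .
  qed
  have mU: "0 < measure M U" using basis_meas[OF basis U] .
  have e3: "ennreal (measure M U powr (- inv_exp (ereal tx) - inv_exp (ereal txp)))
      = epowr (ennreal (measure M U powr (- inv_exp (ereal s) - inv_exp (ereal r)))) rho"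
  proof -
    have "- inv_exp (ereal tx) - inv_exp (ereal txp) = (- inv_exp (ereal s) - inv_exp (ereal r)) * rho"
      using params(11,18) by (simp add: algebra_simps)
    then show ?thesis using mU by (simp add: powr_powr)
  qed
  have "ennreal (measure M U powr (- inv_exp (ereal tx) - inv_exp (ereal txp)))
      * Lp_norm ?R (ereal tx) (\<lambda>x. ennreal (vw x)) * Lp_norm ?R (ereal txp) (\<lambda>x. ennreal (1 / vw x))
      = epowr (ennreal (measure M U powr (- inv_exp (ereal s) - inv_exp (ereal r)))
      * Lp_norm ?R (ereal s) (\<lambda>x. ennreal (w x)) * Lp_norm ?R (ereal r) (\<lambda>x. ennreal (1 / w x))) rho"
    unfolding e1 e2 e3 using params(2) by (simp add: epowr_mult ac_simps)
  also have "\<dots> \<le> epowr (SUP U\<in>\<U>. ennreal (measure M U powr (- inv_exp (ereal s) - inv_exp (ereal r)))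
      * Lp_norm (restrict_space M U) (ereal s) (\<lambda>x. ennreal (w x))
      * Lp_norm (restrict_space M U) (ereal r) (\<lambda>x. ennreal (1 / w x))) rho"
    using U params(2) by (intro epowr_mono SUP_upper) auto
  finally show "ennreal (measure M U powr (- inv_exp (ereal tx) - inv_exp (ereal txp)))
      * Lp_norm ?R (ereal tx) (\<lambda>x. ennreal (vw x)) * Lp_norm ?R (ereal txp) (\<lambda>x. ennreal (1 / vw x))
      \<le> epowr (SUP U\<in>\<U>. ennreal (measure M U powr (- inv_exp (ereal s) - inv_exp (ereal r)))
      * Lp_norm (restrict_space M U) (ereal s) (\<lambda>x. ennreal (w x))
      * Lp_norm (restrict_space M U) (ereal r) (\<lambda>x. ennreal (1 / w x))) rho" .
qed

lemma ctt_ge: "1 \<le> ctt" unfolding ctt_def using params(3) by (intro c_ge) simp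

lemma Nb_pos: "0 < Nb" unfolding Nb_def using ctt_ge Nw_pos by simp

lemma N_bound: "maxop_norm M \<U> (ereal tx) vw \<le> ennreal Nb"
proof -
  have "maxop_norm M \<U> (ereal tx) vw \<le> ennreal ctt * epowr (apc_p M \<U> (ereal tx) vw) txp"
    using max_bd[of "ereal tx" vw] params(3) vw_weight by (simp add: conj_tx ctt_def)
  also have "\<dots> \<le> ennreal ctt * epowr (epowr (apc M \<U> (ereal s) (ereal r) w w) rho) txp"
    using stepA params(4) by (intro mult_left_mono epowr_mono) auto
  also have "\<dots> = ennreal ctt * ennreal (Nw powr s)"
    using params(10) Nw_pos by (simp add: Nw_eq epowr_epowr powr_powr)
  also have "\<dots> = ennreal Nb" unfolding Nb_def using ctt_ge by (simp add: ennreal_mult)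
  finally show ?thesis .
qed

end



context extrap begin

lemma RdF:
  assumes H[measurable]: "H \<in> borel_measurable M" and Hnn: "\<And>x. x \<in> space M \<Longrightarrow> 0 \<le> H x"
    and Hpos: "0 < emeasure M {x\<in>space M. H x \<noteq> 0}"
    and Hfin: "Lp_norm M (ereal tx) (\<lambda>x. ennreal (H x * vw x)) < \<top>"
    and kap: "1 < \<kappa>"
  shows "\<exists>V. V \<in> borel_measurable M \<and> (\<forall>x\<in>space M. 0 < V x) \<and> (AE x in M. H x \<le> V x)
     \<and> Lp_norm M (ereal tx) (\<lambda>x. ennreal (V x * vw x)) \<le> ennreal \<kappa> * Lp_norm M (ereal tx) (\<lambda>x. ennreal (H x * vw x))
     \<and> (\<forall>Q\<in>\<U>. AE x in M. x \<in> Q \<longrightarrow>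
          ennreal (1 / measure M Q) * (\<integral>\<^sup>+y\<in>Q. ennreal (V y) \<partial>M) \<le> ennreal (\<kappa>/(\<kappa>-1) * Nb * V x))"
proof -
  define L where "L = Lp_norm M (ereal tx) (\<lambda>x. ennreal (H x * vw x))"
  define kp where "kp = \<kappa>/(\<kappa>-1)"
  have kp: "1 < kp" unfolding kp_def using kap by (simp add: field_simps)
  define D where "D = kp * Nb"
  have D: "0 < D" unfolding D_def using kp Nb_pos by simp
  have tx: "0 < tx" using params(3) by simp
  define G where "G = rec_nat (\<lambda>x. ennreal (H x)) (\<lambda>k g. maxop M \<U> (\<lambda>x. enn2real (g x)))"
  have G0: "G 0 = (\<lambda>x. ennreal (H x))" and GS: "\<And>k. G (Suc k) = maxop M \<U> (\<lambda>x. enn2real (G k x))"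
    by (simp_all add: G_def)
  have Gm[measurable]: "G k \<in> borel_measurable M" for k
    by (cases k) (simp_all add: G0 GS maxop_measurable[OF basis])
  have Gb: "Lp_norm M (ereal tx) (\<lambda>x. G k x * ennreal (vw x)) \<le> ennreal (Nb^k) * L" for k
  proof (induction k)
    case 0
    have "Lp_norm M (ereal tx) (\<lambda>x. G 0 x * ennreal (vw x)) = L"
      unfolding L_def G0 using Hnn vw_pos by (intro Lp_cong) (simp add: ennreal_mult_nn less_imp_le)
    then show ?case by simp
  next
    case (Suc k)
    have fin: "Lp_norm M (ereal tx) (\<lambda>x. G k x * ennreal (vw x)) < \<top>"
      using Suc Hfin unfolding L_def[symmetric]
      by (metis ennreal_mult_less_top ennreal_less_top le_less_trans mult_eq_0_iff top.not_eq_extremum)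
    have "AE x in M. G k x * ennreal (vw x) < \<top>" using fin by (intro Lp_finite_AE) auto
    moreover have "AE x in M. x \<in> space M" by (rule AE_space)
    ultimately have Gfin: "AE x in M. G k x < \<top>"
      by eventually_elim (auto intro: fin_of_mult vw_pos)
    define f where "f x = enn2real (G k x)" for x
    have f_meas[measurable]: "f \<in> borel_measurable M" unfolding f_def by measurable
    have wn: "wnorm M (ereal tx) vw f = Lp_norm M (ereal tx) (\<lambda>x. G k x * ennreal (vw x))"
      unfolding wnorm_def
    proof (rule Lp_cong_AE)
      show "AE x in M. ennreal (\<bar>f x\<bar> * vw x) = G k x * ennreal (vw x)"
        using Gfin AE_space
      proof (eventually_elim)
        case (elim x)
        then show ?case using vw_pos[of x] unfolding f_def
          by (simp add: ennreal_mult less_imp_le)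
      qed
    qed (use tx in simp)
    have "Lp_norm M (ereal tx) (\<lambda>x. G (Suc k) x * ennreal (vw x))
        \<le> maxop_norm M \<U> (ereal tx) vw * wnorm M (ereal tx) vw f"
      unfolding GS f_def[symmetric] using basis f_meas vw_weight tx fin wn
      by (intro maxop_bound) auto
    also have "\<dots> \<le> ennreal Nb * (ennreal (Nb^k) * L)"
      unfolding wn using N_bound Suc by (intro mult_mono) auto
    also have "\<dots> = ennreal (Nb^Suc k) * L"
      using Nb_pos by (simp add: ennreal_mult mult.assoc)
    finally show ?case .
  qed
  have Lfin: "L < \<top>" using Hfin unfolding L_def .
  have Gfin_all: "AE x in M. G k x < \<top>" for k
  proof -
    have fin: "Lp_norm M (ereal tx) (\<lambda>x. G k x * ennreal (vw x)) < \<top>"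
      using Gb[of k] Lfin
      by (metis ennreal_mult_less_top ennreal_less_top le_less_trans mult_eq_0_iff top.not_eq_extremum)
    have "AE x in M. G k x * ennreal (vw x) < \<top>" using fin by (intro Lp_finite_AE) auto
    moreover have "AE x in M. x \<in> space M" by (rule AE_space)
    ultimately show ?thesis by eventually_elim (auto intro: fin_of_mult vw_pos)
  qed
  define V where "V x = (\<Sum>k. ennreal (1/D^k) * G k x)" for x
  have V_meas[measurable]: "V \<in> borel_measurable M" unfolding V_def by measurable
    define a where "a k = (1/\<kappa>) * (1/kp)^k" for k
  have a_nn: "0 \<le> a k" for k unfolding a_def using kap kp by simp
  have a1: "(\<Sum>k. ennreal (a k)) = 1"
  proof -
    have sg: "summable (\<lambda>k. (1/kp)^k)" using kp by (intro summable_geometric) simp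
    have "(\<Sum>k. a k) = (1/\<kappa>) * (\<Sum>k. (1/kp)^k)" unfolding a_def using sg by (rule suminf_mult)
    also have "(\<Sum>k. (1/kp)^k) = 1 / (1 - 1/kp)" using kp by (intro suminf_geometric) simp
    also have "(1/\<kappa>) * (1 / (1 - 1/kp)) = 1" unfolding kp_def using kap by (simp add: field_simps)
    finally have "(\<Sum>k. a k) = 1" .
    moreover have "summable a" unfolding a_def using sg by (rule summable_mult)
    ultimately show ?thesis using a_nn by (simp add: suminf_ennreal2)
  qed
  define Y where "Y k x = ennreal (\<kappa> / Nb^k) * (G k x * ennreal (vw x))" for k x
  have Y_meas[measurable]: "Y k \<in> borel_measurable M" for k unfolding Y_def by measurable
  have VY: "V x * ennreal (vw x) = (\<Sum>k. ennreal (a k) * Y k x)" for x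
  proof -
    have "ennreal (1/D^k) * G k x * ennreal (vw x) = ennreal (a k) * Y k x" for k
    proof -
      have "a k * (\<kappa> / Nb^k) = 1/D^k"
        unfolding a_def D_def using kap Nb_pos kp by (simp add: field_simps power_mult_distrib)
      then show ?thesis unfolding Y_def using a_nn[of k] kap Nb_pos
        by (simp add: ennreal_mult[symmetric] mult.assoc[symmetric])
    qed
    then show ?thesis unfolding V_def ennreal_suminf_multc[symmetric] by simp
  qed
  have VL: "Lp_norm M (ereal tx) (\<lambda>x. V x * ennreal (vw x)) \<le> ennreal \<kappa> * L"
  proof -
    have LY: "(\<integral>\<^sup>+x. epowr (Y k x) tx \<partial>M) \<le> epowr (ennreal \<kappa> * L) tx" for k
    proof -
      have "Lp_norm M (ereal tx) (Y k) = ennreal (\<kappa> / Nb^k) * Lp_norm M (ereal tx) (\<lambda>x. G k x * ennreal (vw x))"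
        unfolding Y_def using tx by (intro Lp_cmult) auto
      also have "\<dots> \<le> ennreal (\<kappa> / Nb^k) * (ennreal (Nb^k) * L)"
        using Gb[of k] by (rule mult_left_mono) simp
      also have "\<dots> = ennreal \<kappa> * L"
        using Nb_pos kap by (simp add: ennreal_mult[symmetric] mult.assoc[symmetric])
      finally have "epowr (Lp_norm M (ereal tx) (Y k)) tx \<le> epowr (ennreal \<kappa> * L) tx"
        using tx by (intro epowr_mono) auto
      then show ?thesis using tx by (simp add: Lp_real epowr_inv')
    qed
    have "(\<integral>\<^sup>+x. epowr (V x * ennreal (vw x)) tx \<partial>M) \<le> (\<integral>\<^sup>+x. (\<Sum>k. ennreal (a k) * epowr (Y k x) tx) \<partial>M)"
      unfolding VY using a_nn a1 params(3) by (intro nn_integral_mono jensen_sum) auto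
    also have "\<dots> = (\<Sum>k. ennreal (a k) * (\<integral>\<^sup>+x. epowr (Y k x) tx \<partial>M))"
      by (subst nn_integral_suminf) (auto simp: nn_integral_cmult)
    also have "\<dots> \<le> (\<Sum>k. ennreal (a k) * epowr (ennreal \<kappa> * L) tx)"
      using LY by (intro suminf_le mult_left_mono) auto
    also have "\<dots> = epowr (ennreal \<kappa> * L) tx" using a1 by simp
    finally have "epowr (\<integral>\<^sup>+x. epowr (V x * ennreal (vw x)) tx \<partial>M) (1/tx) \<le> epowr (epowr (ennreal \<kappa> * L) tx) (1/tx)"
      using tx by (intro epowr_mono) auto
    then show ?thesis using tx by (simp add: Lp_real epowr_inv)
  qed
  have Vfin: "AE x in M. V x < \<top>"
  proof -
    have fin: "Lp_norm M (ereal tx) (\<lambda>x. V x * ennreal (vw x)) < \<top>"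
      using VL Lfin
      by (metis ennreal_mult_less_top ennreal_less_top le_less_trans mult_eq_0_iff top.not_eq_extremum)
    have "AE x in M. V x * ennreal (vw x) < \<top>" using fin by (intro Lp_finite_AE) auto
    moreover have "AE x in M. x \<in> space M" by (rule AE_space)
    ultimately show ?thesis by eventually_elim (auto intro: fin_of_mult vw_pos)
  qed
  have VH: "ennreal (H x) \<le> V x" for x
    using ennreal_single_le_suminf[of "\<lambda>k. ennreal (1/D^k) * G k x" 0] unfolding V_def G0 by simp
  have Vpos: "0 < V x" if x: "x \<in> space M" for x
  proof -
    have "{y\<in>space M. enn2real (G 0 y) \<noteq> 0} = {y\<in>space M. H y \<noteq> 0}" using Hnn by (auto simp: G0)
    then have "0 < maxop M \<U> (\<lambda>y. enn2real (G 0 y)) x"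
      using Hpos x by (intro maxop_pos basis) auto
    then have m0: "G 1 x \<noteq> 0" by (simp add: GS)
    have "ennreal (1/D^1) \<noteq> 0" using D by simp
    then have "0 < ennreal (1/D^1) * G 1 x" using m0 by (simp add: zero_less_iff_neq_zero del: power_one_right)
    also have "\<dots> \<le> V x" unfolding V_def by (rule ennreal_single_le_suminf)
    finally show ?thesis .
  qed
  have A1: "ennreal (1 / measure M Q) * (\<integral>\<^sup>+y\<in>Q. V y \<partial>M) \<le> ennreal D * V x" if Q: "Q \<in> \<U>" "x \<in> Q" for Q x
  proof -
    have Qm[measurable]: "Q \<in> sets M" using basis_sets[OF basis Q(1)] .
    have "(\<integral>\<^sup>+y\<in>Q. V y \<partial>M) = (\<integral>\<^sup>+y. (\<Sum>k. ennreal (1/D^k) * (G k y * indicator Q y)) \<partial>M)"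
      unfolding V_def by (simp add: ennreal_suminf_multc[symmetric] mult.assoc)
    also have "\<dots> = (\<Sum>k. ennreal (1/D^k) * (\<integral>\<^sup>+y\<in>Q. G k y \<partial>M))"
      by (subst nn_integral_suminf) (auto simp: nn_integral_cmult)
    finally have e: "(\<integral>\<^sup>+y\<in>Q. V y \<partial>M) = (\<Sum>k. ennreal (1/D^k) * (\<integral>\<^sup>+y\<in>Q. G k y \<partial>M))" .
    have t: "ennreal (1 / measure M Q) * (\<integral>\<^sup>+y\<in>Q. G k y \<partial>M) \<le> G (Suc k) x" for k
    proof -
      have "(\<integral>\<^sup>+y\<in>Q. G k y \<partial>M) = (\<integral>\<^sup>+y\<in>Q. ennreal \<bar>enn2real (G k y)\<bar> \<partial>M)"
        using Gfin_all[of k] by (intro nn_integral_cong_AE) (auto elim!: eventually_mono)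
      then show ?thesis unfolding GS using maxop_lower[OF Q, of M "\<lambda>y. enn2real (G k y)"] by simp
    qed
    have "ennreal (1 / measure M Q) * (\<integral>\<^sup>+y\<in>Q. V y \<partial>M)
        = (\<Sum>k. ennreal (1/D^k) * (ennreal (1 / measure M Q) * (\<integral>\<^sup>+y\<in>Q. G k y \<partial>M)))"
      unfolding e ennreal_suminf_cmult[symmetric] by (simp add: ac_simps)
    also have "\<dots> \<le> (\<Sum>k. ennreal (1/D^k) * G (Suc k) x)"
      using t by (intro suminf_le mult_left_mono) auto
    also have "\<dots> = ennreal D * (\<Sum>k. ennreal (1/D^(Suc k)) * G (Suc k) x)"
    proof -
      have "ennreal (1/D^k) = ennreal D * ennreal (1/D^(Suc k))" for k
        using D by (simp add: ennreal_mult[symmetric])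
      then show ?thesis unfolding ennreal_suminf_cmult[symmetric] by (simp add: mult.assoc)
    qed
    also have "\<dots> \<le> ennreal D * V x"
      unfolding V_def by (intro mult_left_mono ennreal_suminf_shift_le) auto
    finally show ?thesis .
  qed
  define V' where "V' x = (if V x = \<top> then 1 else enn2real (V x))" for x
  have V'_meas[measurable]: "V' \<in> borel_measurable M" unfolding V'_def by measurable
  have V'pos: "\<forall>x\<in>space M. 0 < V' x"
    using Vpos unfolding V'_def by (auto simp: enn2real_positive_iff less_top)
  have V'V: "AE x in M. ennreal (V' x) = V x" using Vfin
    by (auto elim!: eventually_mono simp: V'_def)
  have "AE x in M. H x \<le> V' x" using Vfin AE_space
  proof eventually_elim
    case (elim x)
    then have "enn2real (ennreal (H x)) \<le> enn2real (V x)" using VH by (intro enn2real_mono) auto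
    then show ?case using elim Hnn unfolding V'_def by auto
  qed
  moreover have "Lp_norm M (ereal tx) (\<lambda>x. ennreal (V' x * vw x)) \<le> ennreal \<kappa> * L"
  proof -
    have "AE x in M. ennreal (V' x * vw x) = V x * ennreal (vw x)"
      using V'V AE_space
    proof eventually_elim
      case (elim x)
      then show ?case using vw_pos[of x] V'pos by (simp add: ennreal_mult less_imp_le)
    qed
    then have "Lp_norm M (ereal tx) (\<lambda>x. ennreal (V' x * vw x)) = Lp_norm M (ereal tx) (\<lambda>x. V x * ennreal (vw x))"
      using tx by (intro Lp_cong_AE) auto
    then show ?thesis using VL by simp
  qed
  moreover have "\<forall>Q\<in>\<U>. AE x in M. x \<in> Q \<longrightarrow>
          ennreal (1 / measure M Q) * (\<integral>\<^sup>+y\<in>Q. ennreal (V' y) \<partial>M) \<le> ennreal (\<kappa>/(\<kappa>-1) * Nb * V' x)"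
  proof
    fix Q assume Q: "Q \<in> \<U>"
    have eq: "(\<integral>\<^sup>+y\<in>Q. ennreal (V' y) \<partial>M) = (\<integral>\<^sup>+y\<in>Q. V y \<partial>M)"
      using V'V by (intro nn_integral_cong_AE) (auto elim!: eventually_mono)
    show "AE x in M. x \<in> Q \<longrightarrow>
          ennreal (1 / measure M Q) * (\<integral>\<^sup>+y\<in>Q. ennreal (V' y) \<partial>M) \<le> ennreal (\<kappa>/(\<kappa>-1) * Nb * V' x)"
      using V'V AE_space
    proof eventually_elim
      case (elim x)
      show ?case
      proof
        assume "x \<in> Q"
        then have "ennreal (1 / measure M Q) * (\<integral>\<^sup>+y\<in>Q. ennreal (V' y) \<partial>M) \<le> ennreal D * V x"
          unfolding eq using A1[OF Q] by simp
        also have "\<dots> = ennreal (\<kappa>/(\<kappa>-1) * Nb * V' x)"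
        proof -
          have "V x = ennreal (V' x)" using elim by simp
          moreover have "0 \<le> V' x" using V'pos elim by (simp add: less_imp_le)
          ultimately show ?thesis using D unfolding D_def kp_def
            by (simp add: ennreal_mult[symmetric] less_imp_le mult.commute mult.left_commute)
        qed
        finally show "ennreal (1 / measure M Q) * (\<integral>\<^sup>+y\<in>Q. ennreal (V' y) \<partial>M) \<le> ennreal (\<kappa>/(\<kappa>-1) * Nb * V' x)" .
      qed
    qed
  qed
  ultimately show ?thesis using V'_meas V'pos unfolding L_def by blast
qed

end



lemma AE_pos_exists:
  assumes "AE x in M. x \<in> Q \<longrightarrow> P x" "Q \<in> sets M" "0 < emeasure M Q"
  shows "\<exists>x\<in>Q. P x"
proof (rule ccontr)
  assume "\<not> ?thesis"
  then have "AE x in M. x \<notin> Q" using assms(1) by (auto elim!: eventually_mono)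
  then have "Q \<in> null_sets M" using assms(2) by (simp add: AE_iff_null_sets)
  then show False using assms(3) by (simp add: null_setsD1)
qed

lemma real_calc:
  fixes m aQ D bet tht i s0 A :: real
  assumes m: "0 < m" and a: "0 < aQ" and D: "0 < D" and e: "1/s0 + i - bet = tht * A"
  shows "m powr (-1/s0 - i) * aQ powr bet * (aQ/(m*D)) powr (-bet) = D powr bet * (m powr (-A)) powr tht"
proof -
  have 1: "(aQ/(m*D)) powr (-bet) = m powr bet * D powr bet / aQ powr bet"
    using m a D by (simp add: powr_minus_divide powr_divide powr_mult)
  have 2: "m powr (-1/s0 - i) * m powr bet = m powr (-A*tht)"
  proof -
    have "-1/s0 - i + bet = -A*tht" using e by (simp add: algebra_simps)
    then show ?thesis by (simp add: powr_add[symmetric])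
  qed
  have "m powr (-1/s0 - i) * aQ powr bet * (aQ/(m*D)) powr (-bet)
      = (m powr (-1/s0 - i) * m powr bet) * D powr bet * (aQ powr bet / aQ powr bet)"
    unfolding 1 by (simp add: field_simps)
  also have "\<dots> = m powr (-A*tht) * D powr bet" unfolding 2 using a by simp
  also have "\<dots> = D powr bet * (m powr (-A)) powr tht" using m by (simp add: powr_powr)
  finally show ?thesis .
qed

context extrap begin

lemma apc_bound:
  assumes V[measurable]: "V \<in> borel_measurable M" and Vpos: "\<And>x. x \<in> space M \<Longrightarrow> 0 < V x"
    and D: "0 < D"
    and A1: "\<And>Q. Q \<in> \<U> \<Longrightarrow> AE x in M. x \<in> Q \<longrightarrow>
        ennreal (1 / measure M Q) * (\<integral>\<^sup>+y\<in>Q. ennreal (V y) \<partial>M) \<le> ennreal (D * V x)"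
  shows "apc M \<U> (ereal s0) r0 (\<lambda>x. w x * (V x powr bet * w x powr (-(rho*bet))))
            (\<lambda>x. w x * (V x powr bet * w x powr (-(rho*bet)))) \<le> ennreal (D powr bet * Nw powr tht)"
  unfolding apc_def
proof (rule SUP_least)
  fix Q assume Q: "Q \<in> \<U>"
  define w0 where "w0 x = w x * (V x powr bet * w x powr (-(rho*bet)))" for x
  have w0_meas[measurable]: "w0 \<in> borel_measurable M" unfolding w0_def by measurable
  have w0eq: "w0 x = V x powr bet * w x powr tht" if "x \<in> space M" for x
  proof -
    have "w x * w x powr (-(rho*bet)) = w x powr 1 * w x powr (-(rho*bet))"
      using w_pos[OF that] by simp
    also have "\<dots> = w x powr (1 - rho*bet)" by (simp only: powr_add[symmetric] diff_conv_add_uminus)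
    also have "1 - rho*bet = tht" using params(8,12) by simp
    finally have "w x * w x powr (-(rho*bet)) = w x powr tht" .
    then show ?thesis unfolding w0_def by (simp add: ac_simps)
  qed
  let ?R = "restrict_space M Q"
  have Qm[measurable]: "Q \<in> sets M" using basis_sets[OF basis Q] .
  have QS: "Q \<inter> space M \<in> sets M" using Qm by auto
  have spR: "space ?R = Q" using sets.sets_into_space[OF Qm] by (auto simp: space_restrict_space)
  have inS: "x \<in> space ?R \<Longrightarrow> x \<in> space M" for x using sets.sets_into_space[OF Qm] spR by auto
  have mR: "f \<in> borel_measurable M \<Longrightarrow> f \<in> borel_measurable ?R" for f :: "'a \<Rightarrow> ennreal"
    by (rule measurable_restrict_space1)
  define m where "m = measure M Q"
  have m: "0 < m" unfolding m_def using basis_meas[OF basis Q] .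
  have eQ: "emeasure M Q = ennreal m" unfolding m_def using basis_emeas[OF basis Q] .
  define AQ where "AQ = (\<integral>\<^sup>+y\<in>Q. ennreal (V y) \<partial>M)"
  obtain x0 where x0: "x0 \<in> Q" "ennreal (1/m) * AQ \<le> ennreal (D * V x0)"
    using AE_pos_exists[OF A1[OF Q] Qm] eQ m unfolding AQ_def m_def by auto
  have "ennreal (1/m) * AQ < \<top>" using x0(2) le_less_trans by fastforce
  then have AQfin: "AQ < \<top>" using m by (auto simp: ennreal_mult_less_top)
  have AQpos: "AQ \<noteq> 0"
  proof
    assume "AQ = 0"
    then have "AE y in M. ennreal (V y) * indicator Q y = 0" unfolding AQ_def
      by (subst (asm) nn_integral_0_iff_AE) auto
    then have "AE y in M. y \<notin> Q" using AE_space
      by eventually_elim (auto simp: indicator_def dest: Vpos split: if_splits)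
    then have "Q \<in> null_sets M" using Qm by (simp add: AE_iff_null_sets)
    then show False using eQ m by (simp add: null_setsD1)
  qed
  obtain aQ where aQ: "AQ = ennreal aQ" "0 < aQ" using AQfin AQpos
    by (metis ennreal_cases ennreal_eq_0_iff less_top not_le)
  define lo where "lo = aQ / (m * D)"
  have lo: "0 < lo" unfolding lo_def using aQ m D by simp
  have lower: "AE x in ?R. lo \<le> V x"
  proof -
    have "AE x in M. x \<in> Q \<longrightarrow> lo \<le> V x" using A1[OF Q] AE_space
    proof eventually_elim
      case (elim x)
      show ?case
      proof
        assume "x \<in> Q"
        then have "ennreal (1/m * aQ) \<le> ennreal (D * V x)"
          using elim aQ m unfolding AQ_def[symmetric] m_def[symmetric] by (simp add: ennreal_mult_nn)
        then have "1/m * aQ \<le> D * V x" using D Vpos[of x] elim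
          by (subst (asm) ennreal_le_iff) auto
        then show "lo \<le> V x" unfolding lo_def using m D by (simp add: field_simps)
      qed
    qed
    then show ?thesis using QS by (simp add: AE_restrict_space_iff)
  qed
  have F1: "Lp_norm ?R (ereal (1/bet)) (\<lambda>x. ennreal (V x powr bet)) = epowr AQ bet"
  proof -
    have "Lp_norm ?R (ereal (1/bet)) (\<lambda>x. ennreal (V x powr bet)) = Lp_norm ?R (ereal (1/bet)) (\<lambda>x. epowr (ennreal (V x)) bet)"
      using Vpos inS by (intro Lp_cong) (simp add: less_imp_le)
    also have "\<dots> = epowr (Lp_norm ?R (ereal (1/bet * bet)) (\<lambda>x. ennreal (V x))) bet"
      using params(5) by (intro Lp_epowr) auto
    also have "1/bet * bet = 1" using params(5) by simp
    also have "Lp_norm ?R (ereal 1) (\<lambda>x. ennreal (V x)) = AQ"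
      unfolding Lp_one AQ_def using QS by (simp add: nn_integral_restrict_space mult.commute)
    finally show ?thesis .
  qed
  define Y where "Y = Lp_norm ?R (ereal s) (\<lambda>x. ennreal (w x))"
  define Z where "Z = Lp_norm ?R (ereal r) (\<lambda>x. ennreal (1 / w x))"
  have tw: "ennreal (m powr (- inv_exp (ereal s) - inv_exp (ereal r))) * Y * Z \<le> ennreal Nw"
    unfolding Y_def Z_def m_def Nw_eq[symmetric] apc_def using Q by (rule SUP_upper)
  have rc: "m powr (-1/s0 - inv_exp r0) * aQ powr bet * lo powr (-bet) = D powr bet * (m powr (- inv_exp (ereal s) - inv_exp (ereal r))) powr tht"
  proof -
    have e: "- inv_exp (ereal s) - inv_exp (ereal r) = -(1/s + 1/r)" by simp
    show ?thesis unfolding e lo_def using m aQ D params(16) by (intro real_calc) auto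
  qed
  show "ennreal (measure M Q powr (- inv_exp (ereal s0) - inv_exp r0)) *
        Lp_norm ?R (ereal s0) (\<lambda>x. ennreal (w0 x)) * Lp_norm ?R r0 (\<lambda>x. ennreal (1 / w0 x))
        \<le> ennreal (D powr bet * Nw powr tht)"
    unfolding w0_def[symmetric]
  proof (cases "0 < tht")
    case True
    have "r0 \<noteq> \<infinity>" using True by (auto simp: tht_def)
    then obtain r0' where r0': "r0 = ereal r0'" "0 < r0'" using r0_pos by (cases r0) auto
    have r0t: "r0' * tht = r" unfolding tht_def using r0' by simp
    have H1: "Lp_norm ?R (ereal s0) (\<lambda>x. ennreal (w0 x))
        \<le> epowr AQ bet * epowr Y tht"
    proof -
      have "Lp_norm ?R (ereal s0) (\<lambda>x. ennreal (w0 x))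
          = Lp_norm ?R (ereal s0) (\<lambda>x. ennreal (V x powr bet) * epowr (ennreal (w x)) tht)"
        using inS w0eq w_pos by (intro Lp_cong) (simp add: ennreal_mult_nn less_imp_le)
      also have "\<dots> \<le> Lp_norm ?R (ereal (1/bet)) (\<lambda>x. ennreal (V x powr bet))
            * Lp_norm ?R (ereal (s/tht)) (\<lambda>x. epowr (ennreal (w x)) tht)"
        using params(5,15) True s0_pos s_pos by (intro Lp_holder mR) (auto simp: measurable_restrict_space1)
      also have "Lp_norm ?R (ereal (s/tht)) (\<lambda>x. epowr (ennreal (w x)) tht)
          = epowr (Lp_norm ?R (ereal (s/tht*tht)) (\<lambda>x. ennreal (w x))) tht"
        using True s_pos by (intro Lp_epowr) auto
      also have "s/tht*tht = s" using True by simp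
      finally show ?thesis unfolding F1 Y_def .
    qed
    have H2: "Lp_norm ?R r0 (\<lambda>x. ennreal (1 / w0 x)) \<le> ennreal (lo powr (-bet)) * epowr Z tht"
    proof -
      have "Lp_norm ?R (ereal r0') (\<lambda>x. ennreal (1 / w0 x))
          \<le> Lp_norm ?R (ereal r0') (\<lambda>x. ennreal (lo powr (-bet)) * epowr (ennreal (1 / w x)) tht)"
      proof (rule Lp_mono_AE)
        show "AE x in ?R. ennreal (1 / w0 x) \<le> ennreal (lo powr (-bet)) * epowr (ennreal (1 / w x)) tht"
          using lower AE_space
        proof eventually_elim
          case (elim x)
          then have x: "x \<in> space M" using inS by blast
          have Vx: "0 < V x" using Vpos[OF x] .
          have "1 / w0 x = V x powr (-bet) * (1 / w x) powr tht"
            using w0eq[OF x] Vx w_pos[OF x] by (simp add: powr_minus_divide powr_divide)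
          also have "\<dots> \<le> lo powr (-bet) * (1 / w x) powr tht"
            using elim lo params(5) by (intro mult_right_mono powr_mono2') auto
          finally show ?case using w_pos[OF x] lo
            by (simp add: ennreal_mult_nn)
        qed
      qed (use r0' in auto)
      also have "\<dots> = ennreal (lo powr (-bet)) * Lp_norm ?R (ereal r0') (\<lambda>x. epowr (ennreal (1 / w x)) tht)"
        using r0' by (intro Lp_cmult) (auto simp: measurable_restrict_space1)
      also have "Lp_norm ?R (ereal r0') (\<lambda>x. epowr (ennreal (1 / w x)) tht)
          = epowr (Lp_norm ?R (ereal (r0' * tht)) (\<lambda>x. ennreal (1 / w x))) tht"
        using True r0' by (intro Lp_epowr) auto
      finally have X: "Lp_norm ?R (ereal r0') (\<lambda>x. ennreal (1 / w0 x)) \<le> ennreal (lo powr (-bet))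
          * epowr (Lp_norm ?R (ereal (r0' * tht)) (\<lambda>x. ennreal (1 / w x))) tht" .
      show ?thesis unfolding Z_def using X by (simp only: r0'(1)[symmetric] r0t)
    qed
    have "ennreal (measure M Q powr (- inv_exp (ereal s0) - inv_exp r0)) *
        Lp_norm ?R (ereal s0) (\<lambda>x. ennreal (w0 x)) * Lp_norm ?R r0 (\<lambda>x. ennreal (1 / w0 x))
        \<le> ennreal (m powr (-1/s0 - inv_exp r0)) * (epowr AQ bet * epowr Y tht) * (ennreal (lo powr (-bet)) * epowr Z tht)"
      unfolding m_def[symmetric] using H1 H2 by (auto intro!: mult_mono)
    also have "\<dots> = ennreal (m powr (-1/s0 - inv_exp r0) * aQ powr bet * lo powr (-bet)) * (epowr Y tht * epowr Z tht)"
      using aQ by (simp add: ennreal_mult_nn ac_simps)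
    also have "\<dots> = ennreal (D powr bet) * epowr (ennreal (m powr (- inv_exp (ereal s) - inv_exp (ereal r))) * Y * Z) tht"
      unfolding rc using True m by (simp add: epowr_mult ennreal_mult_nn ac_simps)
    also have "\<dots> \<le> ennreal (D powr bet) * epowr (ennreal Nw) tht"
      using tw True by (intro mult_left_mono epowr_mono) auto
    also have "\<dots> = ennreal (D powr bet * Nw powr tht)" using Nw_pos by (simp add: ennreal_mult_nn)
    finally show ?thesis .
  next
    case False
    then have tht0: "tht = 0" using params(7) by simp
    then have "inv_exp r0 = 0" using r_pos unfolding tht_def by simp
    then have r0inf: "r0 = \<infinity>" using r0_pos by (cases r0) (auto simp: inv_exp_def)
    have bs: "bet = 1/s0" using params(15) tht0 by simp
    have w0V: "w0 x = V x powr bet" if "x \<in> space M" for x using w0eq[OF that] tht0 w_pos[OF that] by simp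
    have H1: "Lp_norm ?R (ereal s0) (\<lambda>x. ennreal (w0 x)) = epowr AQ bet"
    proof -
      have "Lp_norm ?R (ereal s0) (\<lambda>x. ennreal (w0 x)) = Lp_norm ?R (ereal (1/bet)) (\<lambda>x. ennreal (V x powr bet))"
      proof -
        have sb: "ereal (1/bet) = ereal s0" using bs s0_pos by simp
        show ?thesis unfolding sb by (rule Lp_cong) (use inS w0V in auto)
      qed
      then show ?thesis using F1 by simp
    qed
    have L: "Lp_norm ?R r0 (\<lambda>x. ennreal (1 / w0 x)) = esssup ?R (\<lambda>x. ennreal (1 / w0 x))"
      unfolding Lp_norm_def using r0inf by simp
    have H2: "Lp_norm ?R r0 (\<lambda>x. ennreal (1 / w0 x)) \<le> ennreal (lo powr (-bet))"
      unfolding L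
    proof (rule esssup_I)
      show "(\<lambda>x. ennreal (1 / w0 x)) \<in> borel_measurable ?R" by (auto simp: measurable_restrict_space1)
      show "AE x in ?R. ennreal (1 / w0 x) \<le> ennreal (lo powr (-bet))"
        using lower AE_space
      proof eventually_elim
        case (elim x)
        then have x: "x \<in> space M" using inS by blast
        have "1 / w0 x = V x powr (-bet)" using w0V[OF x] Vpos[OF x] by (simp add: powr_minus_divide)
        also have "\<dots> \<le> lo powr (-bet)" using elim lo params(5) by (intro powr_mono2') auto
        finally show ?case by (rule ennreal_leI)
      qed
    qed
    have "ennreal (measure M Q powr (- inv_exp (ereal s0) - inv_exp r0)) *
        Lp_norm ?R (ereal s0) (\<lambda>x. ennreal (w0 x)) * Lp_norm ?R r0 (\<lambda>x. ennreal (1 / w0 x))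
        \<le> ennreal (m powr (-1/s0 - inv_exp r0)) * epowr AQ bet * ennreal (lo powr (-bet))"
      unfolding m_def[symmetric] H1 using H2 by (auto intro!: mult_mono)
    also have "\<dots> = ennreal (m powr (-1/s0 - inv_exp r0) * aQ powr bet * lo powr (-bet))"
      using aQ by (simp add: ennreal_mult_nn)
    also have "\<dots> = ennreal (D powr bet * Nw powr tht)" unfolding rc using tht0 m Nw_pos by simp
    finally show ?thesis .
  qed
qed

end



context extrap begin

lemma construct:
  assumes u[measurable]: "u \<in> borel_measurable M" and unn: "\<And>x. x \<in> space M \<Longrightarrow> 0 \<le> u x"
    and upos: "0 < emeasure M {x\<in>space M. u x \<noteq> 0}"
    and ufin: "Lp_norm M (ereal (1/dlt)) (\<lambda>x. ennreal (u x)) < \<top>"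
    and kap: "1 < \<kappa>"
  shows "\<exists>U. U \<in> borel_measurable M \<and> (\<forall>x\<in>space M. 0 < U x) \<and> (AE x in M. u x \<le> U x)
     \<and> Lp_norm M (ereal (1/dlt)) (\<lambda>x. ennreal (U x)) \<le> ennreal (\<kappa> powr bet) * Lp_norm M (ereal (1/dlt)) (\<lambda>x. ennreal (u x))
     \<and> apc M \<U> (ereal s0) r0 (\<lambda>x. w x * U x) (\<lambda>x. w x * U x) \<le> ennreal ((\<kappa>/(\<kappa>-1) * ctt) powr bet * Nw powr (s/s0))"
proof -
  have bet: "0 < bet" using params(5) .
  define H where "H x = u x powr (1/bet) * w x powr rho" for x
  have H_meas[measurable]: "H \<in> borel_measurable M" unfolding H_def by measurable
  have Hnn: "0 \<le> H x" for x unfolding H_def by simp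
  have "{x\<in>space M. H x \<noteq> 0} = {x\<in>space M. u x \<noteq> 0}"
    unfolding H_def using w_pos unn by (auto, metis less_irrefl w_pos)
  then have Hpos: "0 < emeasure M {x\<in>space M. H x \<noteq> 0}" using upos by simp
  have Hv: "H x * vw x = u x powr (1/bet)" if "x \<in> space M" for x
  proof -
    have "w x powr rho * w x powr (-rho) = 1" using w_pos[OF that] by (simp add: powr_add[symmetric])
    then show ?thesis unfolding H_def vw_def by (simp add: mult.assoc)
  qed
  have LH: "Lp_norm M (ereal tx) (\<lambda>x. ennreal (H x * vw x)) = epowr (Lp_norm M (ereal (1/dlt)) (\<lambda>x. ennreal (u x))) (1/bet)"
  proof -
    have "Lp_norm M (ereal tx) (\<lambda>x. ennreal (H x * vw x)) = Lp_norm M (ereal tx) (\<lambda>x. epowr (ennreal (u x)) (1/bet))"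
      using Hv unn by (intro Lp_cong) simp
    also have "\<dots> = epowr (Lp_norm M (ereal (tx * (1/bet))) (\<lambda>x. ennreal (u x))) (1/bet)"
      using params(3) bet by (intro Lp_epowr) auto
    also have "tx * (1/bet) = 1/dlt" using params(19) by simp
    finally show ?thesis .
  qed
  have Hfin: "Lp_norm M (ereal tx) (\<lambda>x. ennreal (H x * vw x)) < \<top>" unfolding LH using ufin by simp
  obtain V where V: "V \<in> borel_measurable M" "\<forall>x\<in>space M. 0 < V x" "AE x in M. H x \<le> V x"
     "Lp_norm M (ereal tx) (\<lambda>x. ennreal (V x * vw x)) \<le> ennreal \<kappa> * Lp_norm M (ereal tx) (\<lambda>x. ennreal (H x * vw x))"
     "\<forall>Q\<in>\<U>. AE x in M. x \<in> Q \<longrightarrow>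
          ennreal (1 / measure M Q) * (\<integral>\<^sup>+y\<in>Q. ennreal (V y) \<partial>M) \<le> ennreal (\<kappa>/(\<kappa>-1) * Nb * V x)"
    using RdF[OF H_meas _ Hpos Hfin kap] Hnn by blast
  have V_meas[measurable]: "V \<in> borel_measurable M" using V(1) .
  define U where "U x = V x powr bet * w x powr (-(rho*bet))" for x
  have U_meas[measurable]: "U \<in> borel_measurable M" unfolding U_def by measurable
  have Upos: "\<forall>x\<in>space M. 0 < U x"
  proof
    fix x assume x: "x \<in> space M"
    then have "0 < V x" "0 < w x" using V(2) w_pos by auto
    then show "0 < U x" unfolding U_def by simp
  qed
  have uU: "AE x in M. u x \<le> U x" using V(3) AE_space
  proof eventually_elim
    case (elim x)
    have wx: "0 < w x" using w_pos elim by blast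
    have Hb: "H x powr bet = u x * w x powr (rho*bet)"
      unfolding H_def using unn[of x] elim wx bet by (simp add: powr_mult powr_powr)
    have "H x powr bet \<le> V x powr bet" using elim Hnn bet by (intro powr_mono2) auto
    then have "u x * w x powr (rho*bet) * w x powr (-(rho*bet)) \<le> V x powr bet * w x powr (-(rho*bet))"
      unfolding Hb by (intro mult_right_mono) auto
    moreover have "w x powr (rho*bet) * w x powr (-(rho*bet)) = 1" using wx by (simp add: powr_add[symmetric])
    ultimately show ?case unfolding U_def by (simp add: mult.assoc)
  qed
  have normU: "Lp_norm M (ereal (1/dlt)) (\<lambda>x. ennreal (U x)) \<le> ennreal (\<kappa> powr bet) * Lp_norm M (ereal (1/dlt)) (\<lambda>x. ennreal (u x))"
  proof -
    have "Lp_norm M (ereal (1/dlt)) (\<lambda>x. ennreal (U x)) = Lp_norm M (ereal (1/dlt)) (\<lambda>x. epowr (ennreal (V x * vw x)) bet)"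
    proof (rule Lp_cong)
      fix x assume x: "x \<in> space M"
      have "(V x * vw x) powr bet = U x"
        unfolding U_def vw_def using V(2) x w_pos[OF x] by (simp add: powr_mult powr_powr)
      then show "ennreal (U x) = epowr (ennreal (V x * vw x)) bet"
        using V(2) x vw_pos[OF x] by (simp add: less_imp_le)
    qed
    also have "\<dots> = epowr (Lp_norm M (ereal (1/dlt * bet)) (\<lambda>x. ennreal (V x * vw x))) bet"
      using params(1) bet by (intro Lp_epowr) auto
    also have "1/dlt * bet = tx" using params(19) bet by (simp add: field_simps)
    also have "epowr (Lp_norm M (ereal tx) (\<lambda>x. ennreal (V x * vw x))) bet
        \<le> epowr (ennreal \<kappa> * epowr (Lp_norm M (ereal (1/dlt)) (\<lambda>x. ennreal (u x))) (1/bet)) bet"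
      using V(4) bet unfolding LH by (intro epowr_mono) auto
    also have "\<dots> = ennreal (\<kappa> powr bet) * Lp_norm M (ereal (1/dlt)) (\<lambda>x. ennreal (u x))"
      using bet kap by (simp add: epowr_mult epowr_epowr)
    finally show ?thesis .
  qed
  have D: "0 < \<kappa>/(\<kappa>-1) * Nb" using kap Nb_pos by simp
  have "apc M \<U> (ereal s0) r0 (\<lambda>x. w x * U x) (\<lambda>x. w x * U x) \<le> ennreal ((\<kappa>/(\<kappa>-1) * Nb) powr bet * Nw powr tht)"
    unfolding U_def using V(2,5) D by (intro apc_bound) auto
  also have "(\<kappa>/(\<kappa>-1) * Nb) powr bet * Nw powr tht = (\<kappa>/(\<kappa>-1) * ctt) powr bet * Nw powr (s/s0)"
  proof -
    have K: "0 < \<kappa>/(\<kappa>-1) * ctt" using kap ctt_ge by simp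
    have e1: "\<kappa>/(\<kappa>-1) * Nb = (\<kappa>/(\<kappa>-1) * ctt) * Nw powr s" unfolding Nb_def by (simp add: mult.assoc)
    have e2: "((\<kappa>/(\<kappa>-1) * ctt) * Nw powr s) powr bet = (\<kappa>/(\<kappa>-1) * ctt) powr bet * (Nw powr s) powr bet"
      by (rule powr_mult)
    have "(\<kappa>/(\<kappa>-1) * Nb) powr bet = (\<kappa>/(\<kappa>-1) * ctt) powr bet * Nw powr (s * bet)"
      unfolding e1 e2 by (simp add: powr_powr)
    then show ?thesis using params(17) Nw_pos by (simp add: mult.assoc powr_add[symmetric])
  qed
  finally show ?thesis using U_meas Upos uU normU by blast
qed

end




lemma enn2ereal_mult_ennreal: "0 \<le> c \<Longrightarrow> enn2ereal (ennreal c * b) = ereal c * enn2ereal b"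
  by (simp add: times_ennreal.rep_eq)

lemma enn2ereal_le_iff: "enn2ereal a \<le> enn2ereal b \<longleftrightarrow> a \<le> b"
  by (simp add: less_eq_ennreal.rep_eq)

lemma Lp_AE_zero:
  assumes "AE x in N. f x = 0" "f \<in> borel_measurable N" "0 < p"
  shows "Lp_norm N p f = 0"
proof (cases p)
  case (real p')
  then show ?thesis using assms by (simp add: Lp_zero_iff)
next
  case PInf
  have "esssup N f \<le> 0" using assms by (intro esssup_I) (auto elim!: eventually_mono)
  then show ?thesis using PInf by (simp add: Lp_norm_def)
qed (use assms in auto)

lemma Lp_empty:
  assumes "space N = {}" "0 < p"
  shows "Lp_norm N p f = 0"
proof -
  have m: "f \<in> borel_measurable N" using assms(1) by (simp add: measurable_def)
  have "AE x in N. f x = 0" using assms(1) by (simp add: AE_iff_measurable[OF _ refl] emeasure_empty)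
  then show ?thesis using Lp_AE_zero m assms(2) by blast
qed

context extrap begin

lemma holder_gw:
  assumes g[measurable]: "g \<in> borel_measurable M" and p0: "0 < p0" and p: "0 < p"
    and rel: "inv_exp p = 1/p0 - dlt"
    and U[measurable]: "U \<in> borel_measurable M" and Unn: "\<And>x. x \<in> space M \<Longrightarrow> 0 \<le> U x"
  shows "wnorm M (ereal p0) (\<lambda>x. w x * U x) g \<le> wnorm M p w g * Lp_norm M (ereal (1/dlt)) (\<lambda>x. ennreal (U x))"
proof -
  have pt: "ennreal (\<bar>g x\<bar> * (w x * U x)) = ennreal (\<bar>g x\<bar> * w x) * ennreal (U x)" if "x \<in> space M" for x
    using w_pos[OF that] Unn[OF that] by (simp add: ennreal_mult_nn mult.assoc)
  have "wnorm M (ereal p0) (\<lambda>x. w x * U x) g = Lp_norm M (ereal p0) (\<lambda>x. ennreal (\<bar>g x\<bar> * w x) * ennreal (U x))"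
    unfolding wnorm_def using pt by (intro Lp_cong) auto
  also have "\<dots> \<le> wnorm M p w g * Lp_norm M (ereal (1/dlt)) (\<lambda>x. ennreal (U x))"
  proof (cases p)
    case (real p')
    have p': "0 < p'" using p real by simp
    have "1/p0 = 1/p' + 1/(1/dlt)" using rel real by simp
    then show ?thesis unfolding wnorm_def real using p0 p' params(1) by (intro Lp_holder) auto
  next
    case PInf
    have pd: "ereal p0 = ereal (1/dlt)" using rel PInf p0 params(1) by (simp add: field_simps)
    define E where "E = esssup M (\<lambda>x. ennreal (\<bar>g x\<bar> * w x))"
    have "Lp_norm M (ereal p0) (\<lambda>x. ennreal (\<bar>g x\<bar> * w x) * ennreal (U x))
        \<le> Lp_norm M (ereal p0) (\<lambda>x. E * ennreal (U x))"
      unfolding E_def using p0 by (intro Lp_mono_AE) (auto elim!: eventually_mono intro!: mult_right_mono esssup_AE[THEN eventually_mono])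
    also have "\<dots> = E * Lp_norm M (ereal p0) (\<lambda>x. ennreal (U x))" using p0 by (intro Lp_cmult) auto
    finally show ?thesis unfolding wnorm_def PInf E_def pd by (simp add: Lp_norm_def)
  qed (use p in auto)
  finally show ?thesis .
qed


lemma u0_exists:
  "\<exists>u0. u0 \<in> borel_measurable M \<and> (\<forall>x\<in>space M. 0 \<le> u0 x) \<and> 0 < emeasure M {x\<in>space M. u0 x \<noteq> 0}
     \<and> Lp_norm M (ereal (1/dlt)) (\<lambda>x. ennreal (u0 x)) < \<top>"
proof -
  obtain x where x: "x \<in> space M" using nonempty by auto
  then obtain Q where Q: "Q \<in> \<U>" "x \<in> Q" using basis unfolding is_basis_def by blast
  have Qm[measurable]: "Q \<in> sets M" using basis_sets[OF basis Q(1)] .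
  have Qfin: "emeasure M Q < \<top>" "0 < emeasure M Q" using basis Q(1) unfolding is_basis_def by auto
  define u0 :: "'a \<Rightarrow> real" where "u0 y = indicator Q y" for y
  have m[measurable]: "u0 \<in> borel_measurable M" unfolding u0_def by measurable
  have "{y\<in>space M. u0 y \<noteq> 0} = Q" using sets.sets_into_space[OF Qm] by (auto simp: u0_def indicator_def)
  moreover have "Lp_norm M (ereal (1/dlt)) (\<lambda>x. ennreal (u0 x)) < \<top>"
  proof -
    have "(\<integral>\<^sup>+y. epowr (ennreal (u0 y)) (1/dlt) \<partial>M) = (\<integral>\<^sup>+y. indicator Q y \<partial>M)"
      unfolding u0_def by (intro nn_integral_cong) (auto simp: indicator_def)
    then show ?thesis using Qfin by (simp add: Lp_real)
  qed
  ultimately show ?thesis using m Qfin by (intro exI[of _ u0]) (auto simp: u0_def)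
qed

lemma weight_from_u:
  assumes g[measurable]: "g \<in> borel_measurable M" and p0: "0 < p0" and p: "0 < p"
    and relp: "inv_exp p = 1/p0 - dlt"
    and u[measurable]: "u \<in> borel_measurable M" and unn: "\<And>x. x \<in> space M \<Longrightarrow> 0 \<le> u x"
    and upos: "0 < emeasure M {x\<in>space M. u x \<noteq> 0}"
    and ufin: "Lp_norm M (ereal (1/dlt)) (\<lambda>x. ennreal (u x)) < \<top>"
    and kap: "1 < \<kappa>"
  shows "\<exists>U. U \<in> borel_measurable M \<and> (AE x in M. u x \<le> U x) \<and> (\<forall>x\<in>space M. 0 < U x)
     \<and> is_weight M (\<lambda>x. w x * U x)
     \<and> apc M \<U> (ereal s0) r0 (\<lambda>x. w x * U x) (\<lambda>x. w x * U x) \<le> ennreal ((\<kappa>/(\<kappa>-1) * ctt) powr bet * Nw powr (s/s0))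
     \<and> wnorm M (ereal p0) (\<lambda>x. w x * U x) g \<le> wnorm M p w g * (ennreal (\<kappa> powr bet) * Lp_norm M (ereal (1/dlt)) (\<lambda>x. ennreal (u x)))"
proof -
  obtain U where U: "U \<in> borel_measurable M" "\<forall>x\<in>space M. 0 < U x" "AE x in M. u x \<le> U x"
     "Lp_norm M (ereal (1/dlt)) (\<lambda>x. ennreal (U x)) \<le> ennreal (\<kappa> powr bet) * Lp_norm M (ereal (1/dlt)) (\<lambda>x. ennreal (u x))"
     "apc M \<U> (ereal s0) r0 (\<lambda>x. w x * U x) (\<lambda>x. w x * U x) \<le> ennreal ((\<kappa>/(\<kappa>-1) * ctt) powr bet * Nw powr (s/s0))"
    using construct[OF u unn upos ufin kap] by blast
  have Um[measurable]: "U \<in> borel_measurable M" using U(1) .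
  have "is_weight M (\<lambda>x. w x * U x)" unfolding is_weight_def using U(2) w_pos by auto
  moreover have "wnorm M (ereal p0) (\<lambda>x. w x * U x) g \<le> wnorm M p w g * (ennreal (\<kappa> powr bet) * Lp_norm M (ereal (1/dlt)) (\<lambda>x. ennreal (u x)))"
  proof -
    have "wnorm M (ereal p0) (\<lambda>x. w x * U x) g \<le> wnorm M p w g * Lp_norm M (ereal (1/dlt)) (\<lambda>x. ennreal (U x))"
      using U(2) p0 p relp by (intro holder_gw) (auto simp: less_imp_le)
    also have "\<dots> \<le> wnorm M p w g * (ennreal (\<kappa> powr bet) * Lp_norm M (ereal (1/dlt)) (\<lambda>x. ennreal (u x)))"
      using U(4) by (rule mult_left_mono) simp
    finally show ?thesis .
  qed
  ultimately show ?thesis using U by blast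
qed

end



context extrap begin

lemma main:
  fixes V :: "'v set" and S T :: "'v \<Rightarrow> 'a \<Rightarrow> real" and \<phi> :: "real \<Rightarrow> real"
    and p q :: ereal and p0 q0 :: real
  assumes sf: "sigma_finite_measure M"
    and p0: "0 < p0" and q0: "0 < q0" and p: "0 < p" and q: "0 < q"
    and relq: "inv_exp q = 1/q0 - dlt" and relp: "inv_exp p = 1/p0 - dlt"
    and S_meas: "\<And>f. f \<in> V \<Longrightarrow> S f \<in> borel_measurable M"
    and T_meas: "\<And>f w0. is_weight M w0 \<Longrightarrow> apc M \<U> (ereal s0) r0 w0 w0 < \<top> \<Longrightarrow>
        f \<in> V \<Longrightarrow> S f \<in> Lpw M (ereal p0) w0 \<Longrightarrow> T f \<in> borel_measurable M"
    and phi_mono: "mono \<phi>"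
    and T_bd: "\<And>f w0. is_weight M w0 \<Longrightarrow> apc M \<U> (ereal s0) r0 w0 w0 < \<top> \<Longrightarrow>
        f \<in> V \<Longrightarrow> S f \<in> Lpw M (ereal p0) w0 \<Longrightarrow>
        enn2ereal (wnorm M (ereal q0) w0 (T f))
          \<le> ereal (\<phi> (enn2real (apc M \<U> (ereal s0) r0 w0 w0)))
             * enn2ereal (wnorm M (ereal p0) w0 (S f))"
  shows "{f \<in> V. S f \<in> Lpw M p w}
           \<subseteq> {f \<in> V. \<exists>w0. is_weight M w0 \<and> apc M \<U> (ereal s0) r0 w0 w0 < \<top>
                            \<and> S f \<in> Lpw M (ereal p0) w0}
       \<and> (\<forall>\<kappa>::real. \<forall>f. 1 < \<kappa> \<longrightarrow> f \<in> V \<longrightarrow> S f \<in> Lpw M p w \<longrightarrow>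
            enn2ereal (wnorm M q w (T f))
               \<le> ereal (\<kappa> powr bet * \<phi> ((\<kappa>/(\<kappa>-1) * c (ereal tx)) powr bet
                       * enn2real (apc M \<U> (ereal s) (ereal r) w w) powr (s / s0)))
                 * enn2ereal (wnorm M p w (S f)))"
proof -
  obtain u0 where u0: "u0 \<in> borel_measurable M" "\<forall>x\<in>space M. 0 \<le> u0 x" "0 < emeasure M {x\<in>space M. u0 x \<noteq> 0}"
     "Lp_norm M (ereal (1/dlt)) (\<lambda>x. ennreal (u0 x)) < \<top>"
    using u0_exists by blast
    have W: "\<exists>U. U \<in> borel_measurable M \<and> (AE x in M. u x \<le> U x) \<and> (\<forall>x\<in>space M. 0 < U x)
     \<and> is_weight M (\<lambda>x. w x * U x)
     \<and> apc M \<U> (ereal s0) r0 (\<lambda>x. w x * U x) (\<lambda>x. w x * U x) \<le> ennreal ((\<kappa>/(\<kappa>-1) * ctt) powr bet * Nw powr (s/s0))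
     \<and> apc M \<U> (ereal s0) r0 (\<lambda>x. w x * U x) (\<lambda>x. w x * U x) < \<top>
     \<and> S f \<in> Lpw M (ereal p0) (\<lambda>x. w x * U x)
     \<and> wnorm M (ereal p0) (\<lambda>x. w x * U x) (S f) \<le> wnorm M p w (S f) * (ennreal (\<kappa> powr bet) * Lp_norm M (ereal (1/dlt)) (\<lambda>x. ennreal (u x)))"
    if f: "f \<in> V" "S f \<in> Lpw M p w" and kap: "1 < \<kappa>"
      and u: "u \<in> borel_measurable M" "\<forall>x\<in>space M. 0 \<le> u x" "0 < emeasure M {x\<in>space M. u x \<noteq> 0}"
      "Lp_norm M (ereal (1/dlt)) (\<lambda>x. ennreal (u x)) < \<top>" for f \<kappa> u
  proof -
    have g[measurable]: "S f \<in> borel_measurable M" using S_meas f(1) .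
    obtain U where U: "U \<in> borel_measurable M" "AE x in M. u x \<le> U x" "\<forall>x\<in>space M. 0 < U x"
     "is_weight M (\<lambda>x. w x * U x)"
     "apc M \<U> (ereal s0) r0 (\<lambda>x. w x * U x) (\<lambda>x. w x * U x) \<le> ennreal ((\<kappa>/(\<kappa>-1) * ctt) powr bet * Nw powr (s/s0))"
     "wnorm M (ereal p0) (\<lambda>x. w x * U x) (S f) \<le> wnorm M p w (S f) * (ennreal (\<kappa> powr bet) * Lp_norm M (ereal (1/dlt)) (\<lambda>x. ennreal (u x)))"
      using weight_from_u[OF g p0 p relp u(1) _ u(3) u(4) kap] u(2) by blast
    have fin: "apc M \<U> (ereal s0) r0 (\<lambda>x. w x * U x) (\<lambda>x. w x * U x) < \<top>"
      using U(5) by (simp add: le_less_trans)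
    have "wnorm M (ereal p0) (\<lambda>x. w x * U x) (S f) < \<top>"
    proof -
      have "wnorm M p w (S f) < \<top>" using f(2) by (simp add: Lpw_def)
      then have "wnorm M p w (S f) * (ennreal (\<kappa> powr bet) * Lp_norm M (ereal (1/dlt)) (\<lambda>x. ennreal (u x))) < \<top>"
        using u(4) by (simp add: ennreal_mult_less_top)
      then show ?thesis using U(6) by (simp add: le_less_trans)
    qed
    then have "S f \<in> Lpw M (ereal p0) (\<lambda>x. w x * U x)" by (simp add: Lpw_def)
    then show ?thesis using U fin by blast
  qed
  have part1: "{f \<in> V. S f \<in> Lpw M p w}
           \<subseteq> {f \<in> V. \<exists>w0. is_weight M w0 \<and> apc M \<U> (ereal s0) r0 w0 w0 < \<top>
                            \<and> S f \<in> Lpw M (ereal p0) w0}"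
  proof safe
    fix f assume f: "f \<in> V" "S f \<in> Lpw M p w"
    obtain U where "is_weight M (\<lambda>x. w x * U x)" "apc M \<U> (ereal s0) r0 (\<lambda>x. w x * U x) (\<lambda>x. w x * U x) < \<top>"
      "S f \<in> Lpw M (ereal p0) (\<lambda>x. w x * U x)"
      using W[OF f, of 2 u0] u0 by auto
    then show "\<exists>w0. is_weight M w0 \<and> apc M \<U> (ereal s0) r0 w0 w0 < \<top> \<and> S f \<in> Lpw M (ereal p0) w0" by blast
  qed
  have part2: "enn2ereal (wnorm M q w (T f))
               \<le> ereal (\<kappa> powr bet * \<phi> ((\<kappa>/(\<kappa>-1) * c (ereal tx)) powr bet
                       * enn2real (apc M \<U> (ereal s) (ereal r) w w) powr (s / s0)))
                 * enn2ereal (wnorm M p w (S f))"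
    if kap: "1 < \<kappa>" and f: "f \<in> V" "S f \<in> Lpw M p w" for \<kappa> f
  proof -
    define X where "X = (\<kappa>/(\<kappa>-1) * ctt) powr bet * Nw powr (s/s0)"
    have Xe: "(\<kappa>/(\<kappa>-1) * c (ereal tx)) powr bet * enn2real (apc M \<U> (ereal s) (ereal r) w w) powr (s / s0) = X"
      unfolding X_def ctt_def Nw_def ..
    have X0: "0 \<le> X" unfolding X_def by simp
    define g where "g = S f"
    have g[measurable]: "g \<in> borel_measurable M" unfolding g_def using S_meas f(1) .
    define WW where "WW = wnorm M p w g"
    have phiw: "\<phi> (enn2real (apc M \<U> (ereal s0) r0 w0 w0)) \<le> \<phi> X"
      if "apc M \<U> (ereal s0) r0 w0 w0 \<le> ennreal X" for w0
    proof -
      have "enn2real (apc M \<U> (ereal s0) r0 w0 w0) \<le> enn2real (ennreal X)"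
        using that by (intro enn2real_mono) auto
      then show ?thesis using X0 phi_mono by (simp add: monoD)
    qed
    obtain U0 where U0m: "U0 \<in> borel_measurable M" and U0: "AE x in M. u0 x \<le> U0 x" "\<forall>x\<in>space M. 0 < U0 x"
     "is_weight M (\<lambda>x. w x * U0 x)"
     "apc M \<U> (ereal s0) r0 (\<lambda>x. w x * U0 x) (\<lambda>x. w x * U0 x) \<le> ennreal X"
     "apc M \<U> (ereal s0) r0 (\<lambda>x. w x * U0 x) (\<lambda>x. w x * U0 x) < \<top>"
     "S f \<in> Lpw M (ereal p0) (\<lambda>x. w x * U0 x)"
      using W[OF f kap u0(1-4)] unfolding X_def by blast
    note U0m[measurable]
    have h[measurable]: "T f \<in> borel_measurable M" using T_meas[OF U0(3) U0(5) f(1) U0(6)] .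
    define h where "h = T f"
    have hm[measurable]: "h \<in> borel_measurable M" unfolding h_def using h .
    show ?thesis
    proof (cases "\<phi> X < 0")
      case True
      let ?w0 = "\<lambda>x. w x * U0 x"
      have bd: "enn2ereal (wnorm M (ereal q0) ?w0 h) \<le> ereal (\<phi> (enn2real (apc M \<U> (ereal s0) r0 ?w0 ?w0))) * enn2ereal (wnorm M (ereal p0) ?w0 g)"
        unfolding g_def h_def using T_bd[OF U0(3) U0(5) f(1) U0(6)] .
      have neg: "\<phi> (enn2real (apc M \<U> (ereal s0) r0 ?w0 ?w0)) < 0" using phiw[OF U0(4)] True by simp
      have B0: "wnorm M (ereal p0) ?w0 g = 0"
      proof (rule ccontr)
        assume "wnorm M (ereal p0) ?w0 g \<noteq> 0"
        then have "0 < enn2ereal (wnorm M (ereal p0) ?w0 g)"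
          by (metis less_ennreal.rep_eq zero_ennreal.rep_eq zero_less_iff_neq_zero)
        then have "ereal (\<phi> (enn2real (apc M \<U> (ereal s0) r0 ?w0 ?w0))) * enn2ereal (wnorm M (ereal p0) ?w0 g) < 0"
          using neg by (cases "enn2ereal (wnorm M (ereal p0) ?w0 g)") (auto simp: mult_neg_pos)
        then show False using bd enn2ereal_nonneg[of "wnorm M (ereal q0) ?w0 h"] by (meson less_le_trans not_less order_trans)
      qed
      have "enn2ereal (wnorm M (ereal q0) ?w0 h) \<le> enn2ereal 0"
        using bd unfolding B0 by (simp add: zero_ennreal.rep_eq)
      then have A0: "wnorm M (ereal q0) ?w0 h = 0" by (simp add: enn2ereal_le_iff)
      have w0pos: "AE x in M. 0 < w x * U0 x" using U0(2) w_pos by (intro AE_I2) auto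
      have "AE x in M. ennreal (\<bar>g x\<bar> * (w x * U0 x)) = 0"
        using B0 p0 unfolding wnorm_def by (subst (asm) Lp_zero_iff) auto
      then have gz: "AE x in M. ennreal (\<bar>g x\<bar> * w x) = 0" using w0pos
        by eventually_elim (auto simp: ennreal_eq_0_iff mult_le_0_iff zero_less_mult_iff)
      have "AE x in M. ennreal (\<bar>h x\<bar> * (w x * U0 x)) = 0"
        using A0 q0 unfolding wnorm_def by (subst (asm) Lp_zero_iff) auto
      then have hz: "AE x in M. ennreal (\<bar>h x\<bar> * w x) = 0" using w0pos
        by eventually_elim (auto simp: ennreal_eq_0_iff mult_le_0_iff zero_less_mult_iff)
      have "wnorm M p w g = 0" unfolding wnorm_def using gz p by (intro Lp_AE_zero) auto
      moreover have "wnorm M q w h = 0" unfolding wnorm_def using hz q by (intro Lp_AE_zero) auto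
      ultimately show ?thesis unfolding g_def h_def by (simp add: zero_ennreal.rep_eq)
    next
      case False
      then have phiX: "0 \<le> \<phi> X" by simp
      define K where "K = \<kappa> powr bet * \<phi> X"
      have K: "0 \<le> K" unfolding K_def using phiX by simp
      define F where "F x = \<bar>h x\<bar> * w x" for x
      have F_meas[measurable]: "F \<in> borel_measurable M" unfolding F_def by measurable
      have Fnn: "0 \<le> F x" if "x \<in> space M" for x unfolding F_def using w_pos[OF that] by simp
      have key: "lv \<le> ennreal K * WW" if lv: "lv < wnorm M q w h" for lv
      proof -
        have lvF: "lv < Lp_norm M q (\<lambda>x. ennreal (F x))" using lv unfolding wnorm_def F_def .
        obtain u where u: "u \<in> borel_measurable M" "\<forall>x\<in>space M. 0 \<le> u x"
          "Lp_norm M (ereal (1/dlt)) (\<lambda>x. ennreal (u x)) \<le> 1"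
          "lv \<le> Lp_norm M (ereal q0) (\<lambda>x. ennreal (F x * u x))"
        proof (cases q)
          case (real q')
          have "0 < q'" using q real by simp
          moreover have "1/q' = 1/q0 - dlt" using relq real by simp
          ultimately show ?thesis using duality_fin[OF sf F_meas Fnn _ q0 params(1) _ lvF[unfolded real]] that by blast
        next
          case PInf
          have qd: "ereal q0 = ereal (1/dlt)" using relq PInf q0 params(1) by (simp add: field_simps)
          have "lv < esssup M (\<lambda>x. ennreal (F x))" using lvF PInf by (simp add: Lp_norm_def)
          then show ?thesis using duality_inf[OF sf F_meas Fnn q0] that unfolding qd by blast
        qed (use q in auto)
        have um[measurable]: "u \<in> borel_measurable M" using u(1) .
        show ?thesis
        proof (cases "0 < emeasure M {x\<in>space M. u x \<noteq> 0}")
          case False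
          then have "emeasure M {x\<in>space M. u x \<noteq> 0} = 0" by (simp add: not_gr_zero)
          then have "AE x in M. u x = 0" by (subst AE_iff_measurable[OF _ refl]) (auto simp: not_not)
          then have "AE x in M. ennreal (F x * u x) = 0" by (auto elim!: eventually_mono)
          then have "Lp_norm M (ereal q0) (\<lambda>x. ennreal (F x * u x)) = 0"
            using q0 by (intro Lp_AE_zero) auto
          then show ?thesis using u(4) by simp
        next
          case True
          have ufin: "Lp_norm M (ereal (1/dlt)) (\<lambda>x. ennreal (u x)) < \<top>" using u(3) by (simp add: le_less_trans)
          obtain U where U: "AE x in M. u x \<le> U x" "\<forall>x\<in>space M. 0 < U x"
           "is_weight M (\<lambda>x. w x * U x)"
           "apc M \<U> (ereal s0) r0 (\<lambda>x. w x * U x) (\<lambda>x. w x * U x) \<le> ennreal X"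
           "apc M \<U> (ereal s0) r0 (\<lambda>x. w x * U x) (\<lambda>x. w x * U x) < \<top>"
           "S f \<in> Lpw M (ereal p0) (\<lambda>x. w x * U x)"
           "wnorm M (ereal p0) (\<lambda>x. w x * U x) (S f) \<le> wnorm M p w (S f) * (ennreal (\<kappa> powr bet) * Lp_norm M (ereal (1/dlt)) (\<lambda>x. ennreal (u x)))"
            using W[OF f kap u(1,2) True ufin] unfolding X_def by blast
          let ?w0 = "\<lambda>x. w x * U x"
          have "lv \<le> Lp_norm M (ereal q0) (\<lambda>x. ennreal (F x * u x))" using u(4) .
          also have "\<dots> \<le> wnorm M (ereal q0) ?w0 h"
            unfolding wnorm_def using U(1) AE_space q0
          proof (intro Lp_mono_AE)
            show "AE x in M. ennreal (F x * u x) \<le> ennreal (\<bar>h x\<bar> * (w x * U x))"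
              using U(1) AE_space
            proof eventually_elim
              case (elim x)
              then show ?case unfolding F_def using w_pos[of x]
                by (intro ennreal_leI) (auto intro!: mult_left_mono simp: mult.assoc)
            qed
          qed auto
          finally have l1: "lv \<le> wnorm M (ereal q0) ?w0 h" .
          have "enn2ereal (wnorm M (ereal q0) ?w0 h) \<le> ereal (\<phi> (enn2real (apc M \<U> (ereal s0) r0 ?w0 ?w0))) * enn2ereal (wnorm M (ereal p0) ?w0 g)"
            unfolding g_def h_def using T_bd[OF U(3) U(5) f(1) U(6)] .
          also have "\<dots> \<le> ereal (\<phi> X) * enn2ereal (wnorm M (ereal p0) ?w0 g)"
            using phiw[OF U(4)] by (intro ereal_mult_right_mono) auto
          also have "\<dots> = enn2ereal (ennreal (\<phi> X) * wnorm M (ereal p0) ?w0 g)"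
            using phiX by (simp add: enn2ereal_mult_ennreal)
          finally have l2: "wnorm M (ereal q0) ?w0 h \<le> ennreal (\<phi> X) * wnorm M (ereal p0) ?w0 g"
            by (simp add: enn2ereal_le_iff)
          also have "\<dots> \<le> ennreal (\<phi> X) * (WW * (ennreal (\<kappa> powr bet) * 1))"
          proof -
            have a: "ennreal (\<kappa> powr bet) * Lp_norm M (ereal (1/dlt)) (\<lambda>x. ennreal (u x)) \<le> ennreal (\<kappa> powr bet) * 1"
              using u(3) by (rule mult_left_mono) simp
            have b: "wnorm M (ereal p0) ?w0 g \<le> WW * (ennreal (\<kappa> powr bet) * 1)"
              using U(7) mult_left_mono[OF a, of WW] unfolding WW_def g_def by (rule order.trans) simp
            show ?thesis using b by (rule mult_left_mono) simp
          qed
          also have "\<dots> = ennreal K * WW" unfolding K_def using phiX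
            by (simp add: ennreal_mult_nn ac_simps)
          finally show ?thesis using l1 by simp
        qed
      qed
      have "wnorm M q w h \<le> ennreal K * WW"
      proof (rule ccontr)
        assume "\<not> ?thesis"
        then have "ennreal K * WW < wnorm M q w h" by simp
        then obtain lv where "ennreal K * WW < lv" "lv < wnorm M q w h" using dense by blast
        then show False using key by (simp add: not_le[symmetric])
      qed
      then have "enn2ereal (wnorm M q w h) \<le> enn2ereal (ennreal K * WW)" by (simp only: enn2ereal_le_iff)
      also have "\<dots> = ereal K * enn2ereal WW" using K by (rule enn2ereal_mult_ennreal)
      finally show ?thesis unfolding Xe K_def WW_def g_def h_def .
    qed
  qed
  show ?thesis using part1 part2 by blast
qed

end

theorem theorem1p1:
  fixes M :: "'a measure" and \<U> :: "'a set set"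
    and q0 p0 s0 s r :: real and r0 q p :: ereal
    and w :: "'a \<Rightarrow> real"
    and c :: "ereal \<Rightarrow> real"
    and V :: "'v set" and S T :: "'v \<Rightarrow> 'a \<Rightarrow> real" and \<phi> :: "real \<Rightarrow> real"
  assumes sf: "sigma_finite_measure M"
    and basis: "is_basis M \<U>"
    and pos: "0 < q0" "0 < p0" "0 < s0" "0 < s" "0 < r" "0 < r0" "0 < q" "0 < p"
    and rel1: "inv_exp q - 1 / q0 = inv_exp p - 1 / p0"
    and rel2: "inv_exp p - 1 / p0 = 1 / s - 1 / s0"
    and rel3: "1 / s - 1 / s0 = inv_exp r0 - 1 / r"
    and rel4: "inv_exp r0 - 1 / r < 0"
    and w_weight: "is_weight M w"
    and w_fin: "apc M \<U> (ereal s) (ereal r) w w < \<top>"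
    and c_ge: "\<And>t. 1 < t \<Longrightarrow> 1 \<le> c t"
    and max_bd: "\<And>t v. 1 < t \<Longrightarrow> is_weight M v \<Longrightarrow>
        maxop_norm M \<U> t v \<le> ennreal (c t) * epowr (apc_p M \<U> t v) (real_of_ereal (conj_exp t))"
    and S_meas: "\<And>f. f \<in> V \<Longrightarrow> S f \<in> borel_measurable M"
    and T_meas: "\<And>f w0. is_weight M w0 \<Longrightarrow> apc M \<U> (ereal s0) r0 w0 w0 < \<top> \<Longrightarrow>
        f \<in> V \<Longrightarrow> S f \<in> Lpw M (ereal p0) w0 \<Longrightarrow> T f \<in> borel_measurable M"
    and phi_mono: "mono \<phi>"
    and T_bd: "\<And>f w0. is_weight M w0 \<Longrightarrow> apc M \<U> (ereal s0) r0 w0 w0 < \<top> \<Longrightarrow>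
        f \<in> V \<Longrightarrow> S f \<in> Lpw M (ereal p0) w0 \<Longrightarrow>
        enn2ereal (wnorm M (ereal q0) w0 (T f))
          \<le> ereal (\<phi> (enn2real (apc M \<U> (ereal s0) r0 w0 w0)))
             * enn2ereal (wnorm M (ereal p0) w0 (S f))"
  shows "{f \<in> V. S f \<in> Lpw M p w}
           \<subseteq> {f \<in> V. \<exists>w0. is_weight M w0 \<and> apc M \<U> (ereal s0) r0 w0 w0 < \<top>
                            \<and> S f \<in> Lpw M (ereal p0) w0}
       \<and> (\<forall>\<kappa>::real. \<forall>f. 1 < \<kappa> \<longrightarrow> f \<in> V \<longrightarrow> S f \<in> Lpw M p w \<longrightarrow>
           (let t = (1 / s + 1 / r) / (1 / r);
                \<beta> = (1 / s + 1 / r) * (1 / r - inv_exp r0) / (1 / r);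
                \<kappa>' = \<kappa> / (\<kappa> - 1)
            in enn2ereal (wnorm M q w (T f))
               \<le> ereal (\<kappa> powr \<beta> * \<phi> ((\<kappa>' * c (ereal t)) powr \<beta>
                       * enn2real (apc M \<U> (ereal s) (ereal r) w w) powr (s / s0)))
                 * enn2ereal (wnorm M p w (S f))))"
proof (cases "space M = {}")
  case True
  have U0: "\<U> = {}"
  proof (rule ccontr)
    assume "\<U> \<noteq> {}"
    then obtain U where U: "U \<in> \<U>" by auto
    then have "U \<subseteq> space M" using basis unfolding is_basis_def by auto
    then have "U = {}" using True by auto
    then show False using basis U unfolding is_basis_def by auto
  qed
  have apc0: "apc M \<U> a b v v' = 0" for a b v v' unfolding apc_def U0 by (simp add: bot_ennreal)
  have wz: "wnorm M p' v g = 0" if "0 < p'" for p' v g unfolding wnorm_def using True that by (rule Lp_empty)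
  show ?thesis
  proof (intro conjI allI impI subsetI)
    fix f assume f: "f \<in> {f \<in> V. S f \<in> Lpw M p w}"
    have "is_weight M (\<lambda>_. 1)" unfolding is_weight_def by simp
    moreover have "S f \<in> Lpw M (ereal p0) (\<lambda>_. 1)"
      using f S_meas pos(2) wz[of "ereal p0"] by (auto simp: Lpw_def)
    ultimately show "f \<in> {f \<in> V. \<exists>w0. is_weight M w0 \<and> apc M \<U> (ereal s0) r0 w0 w0 < \<top> \<and> S f \<in> Lpw M (ereal p0) w0}"
      using f by (auto simp: apc0)
  next
    fix \<kappa> :: real and f
    show "let t = (1 / s + 1 / r) / (1 / r);
                \<beta> = (1 / s + 1 / r) * (1 / r - inv_exp r0) / (1 / r);
                \<kappa>' = \<kappa> / (\<kappa> - 1)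
            in enn2ereal (wnorm M q w (T f))
               \<le> ereal (\<kappa> powr \<beta> * \<phi> ((\<kappa>' * c (ereal t)) powr \<beta>
                       * enn2real (apc M \<U> (ereal s) (ereal r) w w) powr (s / s0)))
                 * enn2ereal (wnorm M p w (S f))"
      using wz[of q w "T f"] wz[of p w "S f"] pos by (simp add: Let_def zero_ennreal.rep_eq)
  qed
next
  case False
  interpret extrap M \<U> s r s0 r0 w c
    using basis pos rel3 rel4 w_weight w_fin c_ge max_bd False by unfold_locales auto
  have relq: "inv_exp q = 1/q0 - dlt" using rel1 rel2 rel3 unfolding dlt_def by simp
  have relp: "inv_exp p = 1/p0 - dlt" using rel2 rel3 unfolding dlt_def by simp
  note R = main[OF sf pos(2) pos(1) pos(8) pos(7) relq relp S_meas T_meas phi_mono T_bd]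
  show ?thesis using R unfolding Let_def tx_def bet_def .
qed

end
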